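(* Let $k\in\{0,1,\dots,\alpha\}$ and $j\in\{1,\dots,2^{\alpha-k}\}$, and let $m$ be a positive integer. Define $R_{k,j}(s)=\max\{r(s,i): (j-1)2^k<i\le j2^k\}$. Then there exist a positive integer $D$ and a residual network $f(\cdot,\tilde\theta^{(k)}_j)$ of size $(d,6^km,D,k+1)$ such that $$\mathbb E_{s\sim\mathcal D}\big(f(s,\tilde\theta^{(k)}_j)-R_{k,j}(s)\big)^2\le 5^k\,\frac{16\sum_{i=(j-1)2^k+1}^{j2^k}\|r(\cdot,i)\|_{\mathcal B}^2}{m}$$ and $\|\tilde\theta^{(k)}_j\|_{\mathcal P}\le (7/2)^k\sum_{i=(j-1)2^k+1}^{j2^k}12\|r(\cdot,i)\|_{\mathcal B}$.
   Context: Residual networks: for positive integers $d,m,D,L$, a residual network of size $(d,m,D,L)$ is a function $f(\cdot,\theta):\mathbb R^d\to\mathbb R$, $f(x,\theta)=u^{\top}h^{[L]}$, where $h^{[0]}=Vx$ and $h^{[l]}=h^{[l-1]}+U^{[l]}\sigma(W^{[l]}h^{[l-1]})$ for $l=1,\dots,L$, with $V\in\mathbb R^{D\times d}$, $W^{[l]}\in\mathbb R^{m\times D}$, $U^{[l]}\in\mathbb R^{D\times m}$, $u\in\mathbb R^D$, $\sigma(z)=\max(z,0)$ applied entrywise, and $\theta=(u,V,\{W^{[l]}\}_{l=1}^L,\{U^{[l]}\}_{l=1}^L)$. Its weighted path norm is $\|\theta\|_{\mathcal P}=\big\||u|^{\top}(I+3|U^{[L]}||W^{[L]}|)\cdots(I+3|U^{[1]}||W^{[1]}|)|V|\big\|_1$,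 where $|\cdot|$ of a matrix/vector is entrywise absolute value and $I$ is the $D\times D$ identity. Barron space: for a compact $S\subset\mathbb R^d$, $h:S\to\mathbb R$ is in the Barron space $\mathcal B(S)$ if there is a probability measure $\rho$ on $\mathbb R\times\mathbb R^d$ with $h(x)=\mathbb E_{(u,w)\sim\rho}[u\,\sigma(w^{\top}x)]$ for all $x\in S$; its Barron norm is $\|h\|_{\mathcal B}=\inf_\rho(\mathbb E_{\rho}[u^2\|w\|_1^2])^{1/2}$, the infimum over all such $\rho$. Setting: $S\subseteq[0,1]^d$ is compact with positive Lebesgue measure and $\mathcal D$ is the uniform distribution on $S$; $A=\{1,\dots,2^{\alpha}\}$ with $\alpha\ge0$ an integer; $r:S\times A\to\mathbb R$ with each $r(\cdot,a)$ continuous, in $\mathcal B(S)$, and $|r(s,a)|\le1$. *)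

theory Defs
  imports "HOL-Probability.Probability"
begin

definition relu :: "real \<Rightarrow> real" where
  "relu z = max z 0"

text \<open>Points of R^d are
  vectors of type real^'d (d = CARD('d)); hidden vectors of dimension D and matrices with
  hidden/width dimensions are functions on nat, only entries with indices below D resp. m
  are used.  u i : i<D;  V i j : i<D, j::'d;  W l q p : q<m, p<D;  U l i q : i<D, q<m.\<close>
record 'd resnet_params =
  pu :: "nat \<Rightarrow> real"
  pV :: "nat \<Rightarrow> 'd \<Rightarrow> real"
  pW :: "nat \<Rightarrow> nat \<Rightarrow> nat \<Rightarrow> real"
  pU :: "nat \<Rightarrow> nat \<Rightarrow> nat \<Rightarrow> real"

primrec resnet_hidden ::
  "nat \<Rightarrow> nat \<Rightarrow> ('d::finite) resnet_params \<Rightarrow> real^'d \<Rightarrow> nat \<Rightarrow> nat \<Rightarrow> real" where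
  "resnet_hidden m D \<theta> x 0 = (\<lambda>i. \<Sum>j\<in>UNIV. pV \<theta> i j * x $ j)"
| "resnet_hidden m D \<theta> x (Suc l) =
     (\<lambda>i. resnet_hidden m D \<theta> x l i +
          (\<Sum>q<m. pU \<theta> (Suc l) i q *
              relu (\<Sum>p<D. pW \<theta> (Suc l) q p * resnet_hidden m D \<theta> x l p)))"

text \<open>Residual network of size (CARD('d), m, D, L).\<close>
definition resnet ::
  "nat \<Rightarrow> nat \<Rightarrow> nat \<Rightarrow> ('d::finite) resnet_params \<Rightarrow> real^'d \<Rightarrow> real" where
  "resnet m D L \<theta> x = (\<Sum>i<D. pu \<theta> i * resnet_hidden m D \<theta> x L i)"

primrec path_mat ::
  "nat \<Rightarrow> nat \<Rightarrow> ('d::finite) resnet_params \<Rightarrow> nat \<Rightarrow> nat \<Rightarrow> 'd \<Rightarrow> real" where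
  "path_mat m D \<theta> 0 = (\<lambda>i j. \<bar>pV \<theta> i j\<bar>)"
| "path_mat m D \<theta> (Suc l) =
     (\<lambda>i j. path_mat m D \<theta> l i j +
        3 * (\<Sum>q<m. \<bar>pU \<theta> (Suc l) i q\<bar> *
               (\<Sum>p<D. \<bar>pW \<theta> (Suc l) q p\<bar> * path_mat m D \<theta> l p j)))"

definition path_norm ::
  "nat \<Rightarrow> nat \<Rightarrow> nat \<Rightarrow> ('d::finite) resnet_params \<Rightarrow> real" where
  "path_norm m D L \<theta> = (\<Sum>j\<in>UNIV. \<bar>\<Sum>i<D. \<bar>pu \<theta> i\<bar> * path_mat m D \<theta> L i j\<bar>)"

definition l1norm :: "real^'d::finite \<Rightarrow> real" where
  "l1norm w = (\<Sum>j\<in>UNIV. \<bar>w $ j\<bar>)"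

definition barron_rep :: "(real^'d::finite) set \<Rightarrow> (real^'d \<Rightarrow> real) \<Rightarrow> (real \<times> (real^'d)) measure \<Rightarrow> bool" where
  "barron_rep S h \<rho> \<longleftrightarrow> prob_space \<rho> \<and> sets \<rho> = sets borel \<and>
     (\<forall>x\<in>S. integrable \<rho> (\<lambda>(u,w). u * relu (w \<bullet> x)) \<and>
             h x = (\<integral>(u,w). u * relu (w \<bullet> x) \<partial>\<rho>))"

definition barron_moments :: "(real^'d::finite) set \<Rightarrow> (real^'d \<Rightarrow> real) \<Rightarrow> real set" where
  "barron_moments S h = {(\<integral>(u,w). u\<^sup>2 * (l1norm w)\<^sup>2 \<partial>\<rho>) | \<rho>.
      barron_rep S h \<rho> \<and> integrable \<rho> (\<lambda>(u,w). u\<^sup>2 * (l1norm w)\<^sup>2)}"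

definition barron_space :: "(real^'d::finite) set \<Rightarrow> (real^'d \<Rightarrow> real) \<Rightarrow> bool" where
  "barron_space S h \<longleftrightarrow> barron_moments S h \<noteq> {}"

definition barron_norm :: "(real^'d::finite) set \<Rightarrow> (real^'d \<Rightarrow> real) \<Rightarrow> real" where
  "barron_norm S h = sqrt (Inf (barron_moments S h))"

definition unif_expect :: "(real^'d::finite) set \<Rightarrow> (real^'d \<Rightarrow> real) \<Rightarrow> real" where
  "unif_expect S g = (LINT s:S|lborel. g s) / measure lborel S"

end

theory Submission
  imports Defs
begin


definition uzero :: "nat \<Rightarrow> ('d::finite) resnet_params \<Rightarrow> bool" where
  "uzero w \<theta> \<longleftrightarrow> (\<forall>l i q. w \<le> q \<longrightarrow> pU \<theta> l i q = 0)"

lemma hidden_width: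
  assumes "uzero w \<theta>" "w \<le> w'"
  shows "resnet_hidden w' D \<theta> x l = resnet_hidden w D \<theta> x l"
proof (induction l)
  case 0 then show ?case by simp
next
  case (Suc l)
  have "\<And>i. (\<Sum>q<w'. pU \<theta> (Suc l) i q * relu (\<Sum>p<D. pW \<theta> (Suc l) q p * resnet_hidden w D \<theta> x l p))
     = (\<Sum>q<w. pU \<theta> (Suc l) i q * relu (\<Sum>p<D. pW \<theta> (Suc l) q p * resnet_hidden w D \<theta> x l p))"
    by (rule sum.mono_neutral_right) (use assms in \<open>auto simp: uzero_def\<close>)
  then show ?case using Suc by simp
qed

lemma path_width:
  assumes "uzero w \<theta>" "w \<le> w'"
  shows "path_mat w' D \<theta> l = path_mat w D \<theta> l"
proof (induction l)
  case 0 then show ?case by simp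
next
  case (Suc l)
  have "\<And>i j. (\<Sum>q<w'. \<bar>pU \<theta> (Suc l) i q\<bar> * (\<Sum>p<D. \<bar>pW \<theta> (Suc l) q p\<bar> * path_mat w D \<theta> l p j))
     = (\<Sum>q<w. \<bar>pU \<theta> (Suc l) i q\<bar> * (\<Sum>p<D. \<bar>pW \<theta> (Suc l) q p\<bar> * path_mat w D \<theta> l p j))"
    by (rule sum.mono_neutral_right) (use assms in \<open>auto simp: uzero_def\<close>)
  then show ?case using Suc by (simp only: path_mat.simps)
qed

lemma resnet_width: "uzero w \<theta> \<Longrightarrow> w \<le> w' \<Longrightarrow> resnet w' D L \<theta> x = resnet w D L \<theta> x"
  unfolding resnet_def by (subst hidden_width[of w \<theta> w']) auto

lemma path_norm_width: "uzero w \<theta> \<Longrightarrow> w \<le> w' \<Longrightarrow> path_norm w' D L \<theta> = path_norm w D L \<theta>"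
  unfolding path_norm_def by (subst path_width[of w \<theta> w']) auto

lemma path_mat_nonneg: "path_mat w D \<theta> l i j \<ge> 0"
  by (induction l arbitrary: i) (auto intro!: add_nonneg_nonneg sum_nonneg mult_nonneg_nonneg)

lemma relu_nonneg: "relu z \<ge> 0" by (simp add: relu_def)

lemma max_relu: "(a + b)/2 + relu (a - b)/2 + relu (b - a)/2 = max a (b::real)"
  by (auto simp: relu_def max_def field_simps)

section \<open>Leaf\<close>

definition leaf :: "nat \<Rightarrow> (nat \<Rightarrow> real) \<Rightarrow> (nat \<Rightarrow> real^'d) \<Rightarrow> ('d::finite) resnet_params" where
  "leaf m c w = \<lparr> pu = (\<lambda>i. if i = m then 1 else 0), pV = (\<lambda>i j. if i < m then w i $ j else 0),
     pW = (\<lambda>l q p. if q = p then 1 else 0), pU = (\<lambda>l i q. if i = m \<and> q < m then c q else 0) \<rparr>"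

lemma leaf_uzero: "uzero m (leaf m c w)" by (simp add: uzero_def leaf_def)


lemma leaf_h0: "resnet_hidden m D (leaf m c w) x 0 p = (if p < m then w p \<bullet> x else 0)"
  by (simp add: leaf_def inner_vec_def mult.commute)

lemma leaf_h1: "resnet_hidden m (Suc m) (leaf m c w) x (Suc 0) m = (\<Sum>q<m. c q * relu (w q \<bullet> x))"
proof -
  have A: "(\<Sum>p<Suc m. pW (leaf m c w) (Suc 0) q p * resnet_hidden m (Suc m) (leaf m c w) x 0 p)
      = w q \<bullet> x" if "q < m" for q
  proof -
    have "(\<Sum>p<Suc m. pW (leaf m c w) (Suc 0) q p * resnet_hidden m (Suc m) (leaf m c w) x 0 p)
       = (\<Sum>p<Suc m. if p = q then w q \<bullet> x else 0)"
      by (rule sum.cong) (use that in \<open>auto simp: leaf_def leaf_h0 inner_vec_def\<close>)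
    also have "\<dots> = w q \<bullet> x" using that by (simp add: sum.delta')
    finally show ?thesis .
  qed
  have "resnet_hidden m (Suc m) (leaf m c w) x (Suc 0) m = resnet_hidden m (Suc m) (leaf m c w) x 0 m +
     (\<Sum>q<m. pU (leaf m c w) (Suc 0) m q * relu (\<Sum>p<Suc m. pW (leaf m c w) (Suc 0) q p * resnet_hidden m (Suc m) (leaf m c w) x 0 p))"
    by (simp only: resnet_hidden.simps)
  also have "\<dots> = 0 + (\<Sum>q<m. c q * relu (w q \<bullet> x))"
  proof -
    have "\<And>q. q \<in> {..<m} \<Longrightarrow> pU (leaf m c w) (Suc 0) m q * relu (\<Sum>p<Suc m. pW (leaf m c w) (Suc 0) q p * resnet_hidden m (Suc m) (leaf m c w) x 0 p)
       = c q * relu (w q \<bullet> x)" by (subst A) (auto simp: leaf_def)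
    then show ?thesis by (simp add: leaf_h0 del: resnet_hidden.simps)
  qed
  finally show ?thesis by simp
qed

lemma leaf_resnet: "resnet m (Suc m) (Suc 0) (leaf m c w) x = (\<Sum>q<m. c q * relu (w q \<bullet> x))"
proof -
  have "resnet m (Suc m) (Suc 0) (leaf m c w) x = (\<Sum>i<Suc m. if i = m then resnet_hidden m (Suc m) (leaf m c w) x (Suc 0) m else 0)"
    unfolding resnet_def by (rule sum.cong) (auto simp: leaf_def)
  also have "\<dots> = resnet_hidden m (Suc m) (leaf m c w) x (Suc 0) m" by (simp add: sum.delta del: resnet_hidden.simps)
  finally show ?thesis by (simp only: leaf_h1)
qed

lemma leaf_p1: "path_mat m (Suc m) (leaf m c w) (Suc 0) m j = 3 * (\<Sum>q<m. \<bar>c q\<bar> * \<bar>w q $ j\<bar>)"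
proof -
  have A: "(\<Sum>p<Suc m. \<bar>pW (leaf m c w) (Suc 0) q p\<bar> * path_mat m (Suc m) (leaf m c w) 0 p j)
      = \<bar>w q $ j\<bar>" if "q < m" for q
  proof -
    have "(\<Sum>p<Suc m. \<bar>pW (leaf m c w) (Suc 0) q p\<bar> * path_mat m (Suc m) (leaf m c w) 0 p j)
       = (\<Sum>p<Suc m. if p = q then \<bar>w q $ j\<bar> else 0)"
      by (rule sum.cong) (use that in \<open>auto simp: leaf_def\<close>)
    also have "\<dots> = \<bar>w q $ j\<bar>" using that by (simp add: sum.delta')
    finally show ?thesis .
  qed
  have "path_mat m (Suc m) (leaf m c w) (Suc 0) m j = path_mat m (Suc m) (leaf m c w) 0 m j +
     3 * (\<Sum>q<m. \<bar>pU (leaf m c w) (Suc 0) m q\<bar> * (\<Sum>p<Suc m. \<bar>pW (leaf m c w) (Suc 0) q p\<bar> * path_mat m (Suc m) (leaf m c w) 0 p j))"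
    by (simp only: path_mat.simps)
  also have "\<dots> = 0 + 3 * (\<Sum>q<m. \<bar>c q\<bar> * \<bar>w q $ j\<bar>)"
    by (rule arg_cong2[where f="(+)"], simp add: leaf_def, rule arg_cong[where f="(*) 3"], rule sum.cong, simp, subst A, simp_all) (simp add: leaf_def)
  finally show ?thesis by simp
qed

lemma leaf_path: "path_norm m (Suc m) (Suc 0) (leaf m c w) = 3 * (\<Sum>q<m. \<bar>c q\<bar> * l1norm (w q))"
proof -
  have "(\<Sum>i<Suc m. \<bar>pu (leaf m c w) i\<bar> * path_mat m (Suc m) (leaf m c w) (Suc 0) i j)
     = (\<Sum>i<Suc m. if i = m then path_mat m (Suc m) (leaf m c w) (Suc 0) m j else 0)" for j
    by (rule sum.cong) (auto simp: leaf_def)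
  also have "\<dots> j = 3 * (\<Sum>q<m. \<bar>c q\<bar> * \<bar>w q $ j\<bar>)" for j
    by (simp add: sum.delta leaf_p1 del: path_mat.simps)
  finally have "path_norm m (Suc m) (Suc 0) (leaf m c w) = (\<Sum>j\<in>UNIV. 3 * (\<Sum>q<m. \<bar>c q\<bar> * \<bar>w q $ j\<bar>))"
    unfolding path_norm_def by (simp add: sum_nonneg)
  also have "\<dots> = 3 * (\<Sum>q<m. \<bar>c q\<bar> * l1norm (w q))"
    by (simp add: l1norm_def sum_distrib_left sum.swap[of _ UNIV])
  finally show ?thesis .
qed


section \<open>Combination\<close>

lemma sum2: "(\<Sum>p<Suc (Suc (2*(D::nat))). F p) = (\<Sum>p<D. F p) + (\<Sum>p<D. F (p+D)) + F (2*D) + (F (Suc (2*D))::real)"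
proof -
  have "(\<Sum>p<2*D. F p) = (\<Sum>p\<in>{0..<D}. F p) + (\<Sum>p\<in>{D..<D+D}. F p)"
    using sum.atLeastLessThan_concat[of 0 D "D+D" F] by (simp add: atLeast0LessThan mult_2)
  also have "(\<Sum>p\<in>{D..<D+D}. F p) = (\<Sum>p<D. F (p+D))"
    using sum.shift_bounds_nat_ivl[of F 0 D D] by (simp add: atLeast0LessThan)
  finally show ?thesis by (simp add: atLeast0LessThan numeral_2_eq_2)
qed

lemma sumw: "(\<Sum>q<2*(w::nat). G q) = (\<Sum>q<w. G q) + (\<Sum>q<w. G (q+w)::real)"
proof -
  have "(\<Sum>p<2*w. G p) = (\<Sum>p\<in>{0..<w}. G p) + (\<Sum>p\<in>{w..<w+w}. G p)"
    using sum.atLeastLessThan_concat[of 0 w "w+w" G] by (simp add: atLeast0LessThan mult_2)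
  also have "(\<Sum>p\<in>{w..<w+w}. G p) = (\<Sum>p<w. G (p+w))"
    using sum.shift_bounds_nat_ivl[of G 0 w w] by (simp add: atLeast0LessThan)
  finally show ?thesis by (simp add: atLeast0LessThan)
qed

definition comb :: "nat \<Rightarrow> nat \<Rightarrow> nat \<Rightarrow> ('d::finite) resnet_params \<Rightarrow> 'd resnet_params \<Rightarrow> 'd resnet_params" where
"comb L D w a b = \<lparr> pu = (\<lambda>i. if i < D then pu a i / 2 else if i < 2*D then pu b (i-D) / 2 else if i < Suc (Suc (2*D)) then 1/2 else 0),
 pV = (\<lambda>i j. if i < D then pV a i j else if i < 2*D then pV b (i-D) j else 0),
 pW = (\<lambda>l q p. if l = Suc L then (if q = 0 then (if p < D then pu a p else if p < 2*D then - pu b (p-D) else 0)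
        else if q = 1 then (if p < D then - pu a p else if p < 2*D then pu b (p-D) else 0) else 0)
     else (if q < w then (if p < D then pW a l q p else 0) else if q < 2*w then (if D \<le> p \<and> p < 2*D then pW b l (q-w) (p-D) else 0) else 0)),
 pU = (\<lambda>l i q. if l = Suc L then (if i = 2*D \<and> q = 0 then 1 else if i = Suc (2*D) \<and> q = 1 then 1 else 0)
     else (if i < D then (if q < w then pU a l i q else 0) else if i < 2*D then (if w \<le> q \<and> q < 2*w then pU b l (i-D) (q-w) else 0) else 0)) \<rparr>"

lemma comb_uzero: "0 < w \<Longrightarrow> uzero (2*w) (comb L D w a b)"
  by (auto simp: uzero_def comb_def)

lemma inner_a: "q < w \<Longrightarrow> l \<noteq> Suc L \<Longrightarrow>
  (\<Sum>p<Suc (Suc (2*D)). pW (comb L D w a b) l q p * H p) = (\<Sum>p<D. pW a l q p * H p)"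
  by (simp only: sum2) (simp add: comb_def)

lemma inner_b: "q < w \<Longrightarrow> l \<noteq> Suc L \<Longrightarrow>
  (\<Sum>p<Suc (Suc (2*D)). pW (comb L D w a b) l (q+w) p * H p) = (\<Sum>p<D. pW b l q p * H (p+D))"
  by (simp only: sum2) (simp add: comb_def)

lemma pU_ca: "l \<noteq> Suc L \<Longrightarrow> i < D \<Longrightarrow> q < w \<Longrightarrow> pU (comb L D w a b) l i q = pU a l i q"
  and pU_ca0: "l \<noteq> Suc L \<Longrightarrow> i < D \<Longrightarrow> q < w \<Longrightarrow> pU (comb L D w a b) l i (q+w) = 0"
  and pU_cb: "l \<noteq> Suc L \<Longrightarrow> D \<le> i \<Longrightarrow> i < 2*D \<Longrightarrow> q < w \<Longrightarrow> pU (comb L D w a b) l i (q+w) = pU b l (i-D) q"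
  and pU_cb0: "l \<noteq> Suc L \<Longrightarrow> D \<le> i \<Longrightarrow> i < 2*D \<Longrightarrow> q < w \<Longrightarrow> pU (comb L D w a b) l i q = 0"
  and pU_c0: "l \<noteq> Suc L \<Longrightarrow> 2*D \<le> i \<Longrightarrow> pU (comb L D w a b) l i q = 0"
  by (auto simp: comb_def)

lemma comb_hidden: "l \<le> L \<Longrightarrow> resnet_hidden (2*w) (Suc (Suc (2*D))) (comb L D w a b) x l i =
   (if i < D then resnet_hidden w D a x l i else if i < 2*D then resnet_hidden w D b x l (i-D) else 0)"
proof (induction l arbitrary: i)
  case 0 then show ?case by (simp add: comb_def)
next
  case (Suc l)
  let ?c = "comb L D w a b"
  let ?H = "resnet_hidden (2*w) (Suc (Suc (2*D))) ?c x l"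
  have IH: "?H p = (if p < D then resnet_hidden w D a x l p else if p < 2*D then resnet_hidden w D b x l (p-D) else 0)" for p
    using Suc by simp
  have ne: "Suc l \<noteq> Suc L" using Suc by simp
  have ia: "(\<Sum>p<Suc (Suc (2*D)). pW ?c (Suc l) q p * ?H p) = (\<Sum>p<D. pW a (Suc l) q p * resnet_hidden w D a x l p)" if "q < w" for q
  proof -
    have "(\<Sum>p<Suc (Suc (2*D)). pW ?c (Suc l) q p * ?H p) = (\<Sum>p<D. pW a (Suc l) q p * ?H p)" by (rule inner_a[OF that ne])
    also have "\<dots> = (\<Sum>p<D. pW a (Suc l) q p * resnet_hidden w D a x l p)" by (rule sum.cong) (use IH in \<open>simp_all del: resnet_hidden.simps\<close>)
    finally show ?thesis .
  qed
  have ib: "(\<Sum>p<Suc (Suc (2*D)). pW ?c (Suc l) (q+w) p * ?H p) = (\<Sum>p<D. pW b (Suc l) q p * resnet_hidden w D b x l p)" if "q < w" for q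
  proof -
    have "(\<Sum>p<Suc (Suc (2*D)). pW ?c (Suc l) (q+w) p * ?H p) = (\<Sum>p<D. pW b (Suc l) q p * ?H (p+D))" by (rule inner_b[OF that ne])
    also have "\<dots> = (\<Sum>p<D. pW b (Suc l) q p * resnet_hidden w D b x l p)" by (rule sum.cong) (use IH in \<open>simp_all del: resnet_hidden.simps\<close>)
    finally show ?thesis .
  qed
  have "resnet_hidden (2*w) (Suc (Suc (2*D))) ?c x (Suc l) i = ?H i + 
    ((\<Sum>q<w. pU ?c (Suc l) i q * relu (\<Sum>p<Suc (Suc (2*D)). pW ?c (Suc l) q p * ?H p)) +
     (\<Sum>q<w. pU ?c (Suc l) i (q+w) * relu (\<Sum>p<Suc (Suc (2*D)). pW ?c (Suc l) (q+w) p * ?H p)))"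
    by (simp only: resnet_hidden.simps sumw)
  also have "\<dots> = ?H i + 
    ((\<Sum>q<w. pU ?c (Suc l) i q * relu (\<Sum>p<D. pW a (Suc l) q p * resnet_hidden w D a x l p)) +
     (\<Sum>q<w. pU ?c (Suc l) i (q+w) * relu (\<Sum>p<D. pW b (Suc l) q p * resnet_hidden w D b x l p)))"
    by (intro arg_cong2[where f="(+)"] refl sum.cong) (simp_all only: lessThan_iff ia ib)
  also have "\<dots> = (if i < D then resnet_hidden w D a x (Suc l) i else if i < 2*D then resnet_hidden w D b x (Suc l) (i-D) else 0)"
  proof (cases "i < D")
    case True
    then show ?thesis using ne by (simp add: IH pU_ca pU_ca0 del: resnet_hidden.simps) simp
  next
    case F: False
    show ?thesis
    proof (cases "i < 2*D")
      case True
      then show ?thesis using ne F by (simp add: IH pU_cb pU_cb0 del: resnet_hidden.simps) simp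
    next
      case False
      then show ?thesis using ne F by (simp add: IH pU_c0 del: resnet_hidden.simps)
    qed
  qed
  finally show ?case .
qed


lemma comb_top_W0: "pW (comb L D w a b) (Suc L) 0 p = (if p<D then pu a p else if p<2*D then -pu b (p-D) else 0)"
  and comb_top_W1: "pW (comb L D w a b) (Suc L) (Suc 0) p = (if p<D then -pu a p else if p<2*D then pu b (p-D) else 0)"
  and comb_top_U: "pU (comb L D w a b) (Suc L) i q = (if i = 2*D \<and> q = 0 then 1 else if i = Suc (2*D) \<and> q = 1 then 1 else 0)"
  by (auto simp: comb_def)

lemma comb_top_inner:
  fixes H :: "nat \<Rightarrow> real"
  shows "(\<Sum>p<Suc (Suc (2*D)). pW (comb L D w a b) (Suc L) 0 p * H p) = (\<Sum>p<D. pu a p * H p) - (\<Sum>p<D. pu b p * H (p+D))"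
    and "(\<Sum>p<Suc (Suc (2*D)). pW (comb L D w a b) (Suc L) (Suc 0) p * H p) = (\<Sum>p<D. pu b p * H (p+D)) - (\<Sum>p<D. pu a p * H p)"
  by (simp_all only: sum2 comb_top_W0 comb_top_W1) (simp_all add: sum_negf)

lemma comb_hidden_top:
  assumes w: "0 < w"
  shows "resnet_hidden (2*w) (Suc (Suc (2*D))) (comb L D w a b) x (Suc L) i =
   (if i < D then resnet_hidden w D a x L i else if i < 2*D then resnet_hidden w D b x L (i-D)
    else if i = 2*D then relu (resnet w D L a x - resnet w D L b x)
    else if i = Suc (2*D) then relu (resnet w D L b x - resnet w D L a x) else 0)"
proof -
  let ?c = "comb L D w a b"
  let ?H = "resnet_hidden (2*w) (Suc (Suc (2*D))) ?c x L"
  have H: "?H p = (if p < D then resnet_hidden w D a x L p else if p < 2*D then resnet_hidden w D b x L (p-D) else 0)" for p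
    by (rule comb_hidden) simp
  have i0: "(\<Sum>p<Suc (Suc (2*D)). pW ?c (Suc L) 0 p * ?H p) = resnet w D L a x - resnet w D L b x"
    unfolding comb_top_inner resnet_def by (intro arg_cong2[where f="(-)"] sum.cong refl) (simp_all add: H del: resnet_hidden.simps)
  have i1: "(\<Sum>p<Suc (Suc (2*D)). pW ?c (Suc L) (Suc 0) p * ?H p) = resnet w D L b x - resnet w D L a x"
    unfolding comb_top_inner resnet_def by (intro arg_cong2[where f="(-)"] sum.cong refl) (simp_all add: H del: resnet_hidden.simps)
  let ?G = "\<lambda>q. relu (\<Sum>p<Suc (Suc (2*D)). pW ?c (Suc L) q p * ?H p)"
  have "(\<Sum>q<2*w. pU ?c (Suc L) i q * ?G q) = (\<Sum>q<2*w. (if q = 0 then (if i = 2*D then ?G 0 else 0) else 0)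
         + (if q = Suc 0 then (if i = Suc (2*D) then ?G (Suc 0) else 0) else 0))"
    by (rule sum.cong) (auto simp: comb_top_U)
  also have "\<dots> = (if i = 2*D then ?G 0 else 0) + (if i = Suc (2*D) then ?G (Suc 0) else 0)"
    using w by (simp add: sum.distrib)
  finally have S: "(\<Sum>q<2*w. pU ?c (Suc L) i q * ?G q) = (if i = 2*D then ?G 0 else 0) + (if i = Suc (2*D) then ?G (Suc 0) else 0)" .
  have "resnet_hidden (2*w) (Suc (Suc (2*D))) ?c x (Suc L) i = ?H i + (\<Sum>q<2*w. pU ?c (Suc L) i q * ?G q)"
    by (simp only: resnet_hidden.simps)
  also have "\<dots> = ?H i + ((if i = 2*D then ?G 0 else 0) + (if i = Suc (2*D) then ?G (Suc 0) else 0))"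
    by (simp only: S)
  also have "\<dots> = (if i < D then resnet_hidden w D a x L i else if i < 2*D then resnet_hidden w D b x L (i-D)
    else if i = 2*D then relu (resnet w D L a x - resnet w D L b x)
    else if i = Suc (2*D) then relu (resnet w D L b x - resnet w D L a x) else 0)"
    by (simp only: i0 i1) (simp add: H del: resnet_hidden.simps)
  finally show ?thesis .
qed

lemma pu_c: "p < D \<Longrightarrow> pu (comb L D w a b) p = pu a p / 2"
  "p < D \<Longrightarrow> pu (comb L D w a b) (p+D) = pu b p / 2"
  "pu (comb L D w a b) (2*D) = 1/2" "pu (comb L D w a b) (Suc (2*D)) = 1/2"
  by (auto simp: comb_def)

lemma comb_resnet:
  assumes w: "0 < w"
  shows "resnet (2*w) (Suc (Suc (2*D))) (Suc L) (comb L D w a b) x = max (resnet w D L a x) (resnet w D L b x)"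
proof -
  let ?ya = "resnet w D L a x" and ?yb = "resnet w D L b x"
  let ?c = "comb L D w a b"
  let ?h = "resnet_hidden (2*w) (Suc (Suc (2*D))) ?c x (Suc L)"
  have "resnet (2*w) (Suc (Suc (2*D))) (Suc L) ?c x =
     (\<Sum>p<D. pu ?c p * ?h p) + (\<Sum>p<D. pu ?c (p+D) * ?h (p+D)) + pu ?c (2*D) * ?h (2*D) + pu ?c (Suc (2*D)) * ?h (Suc (2*D))"
    unfolding resnet_def[of "2*w"] by (rule sum2)
  also have "\<dots> = (\<Sum>p<D. pu a p / 2 * resnet_hidden w D a x L p) + (\<Sum>p<D. pu b p / 2 * resnet_hidden w D b x L p)
      + 1/2 * relu (?ya - ?yb) + 1/2 * relu (?yb - ?ya)"
    apply (intro arg_cong2[where f="(+)"] sum.cong refl)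
    apply (simp_all only: lessThan_iff pu_c comb_hidden_top[OF w])
    apply simp_all
    done
  also have "\<dots> = (?ya + ?yb)/2 + relu (?ya - ?yb)/2 + relu (?yb - ?ya)/2"
    unfolding resnet_def by (simp add: sum_divide_distrib[symmetric] del: resnet_hidden.simps)
  also have "\<dots> = max ?ya ?yb" by (rule max_relu)
  finally show ?thesis .
qed


lemma inner_a_abs: "q < w \<Longrightarrow> l \<noteq> Suc L \<Longrightarrow>
  (\<Sum>p<Suc (Suc (2*D)). \<bar>pW (comb L D w a b) l q p\<bar> * H p) = (\<Sum>p<D. \<bar>pW a l q p\<bar> * H p)"
  by (simp only: sum2) (simp add: comb_def)

lemma inner_b_abs: "q < w \<Longrightarrow> l \<noteq> Suc L \<Longrightarrow>
  (\<Sum>p<Suc (Suc (2*D)). \<bar>pW (comb L D w a b) l (q+w) p\<bar> * H p) = (\<Sum>p<D. \<bar>pW b l q p\<bar> * H (p+D))"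
  by (simp only: sum2) (simp add: comb_def)

lemma comb_path: "l \<le> L \<Longrightarrow> path_mat (2*w) (Suc (Suc (2*D))) (comb L D w a b) l i j =
   (if i < D then path_mat w D a l i j else if i < 2*D then path_mat w D b l (i-D) j else 0)"
proof (induction l arbitrary: i)
  case 0 then show ?case by (simp add: comb_def)
next
  case (Suc l)
  let ?c = "comb L D w a b"
  let ?H = "\<lambda>p. path_mat (2*w) (Suc (Suc (2*D))) ?c l p j"
  have IH: "?H p = (if p < D then path_mat w D a l p j else if p < 2*D then path_mat w D b l (p-D) j else 0)" for p
    using Suc by simp
  have ne: "Suc l \<noteq> Suc L" using Suc by simp
  have ia: "(\<Sum>p<Suc (Suc (2*D)). \<bar>pW ?c (Suc l) q p\<bar> * ?H p) = (\<Sum>p<D. \<bar>pW a (Suc l) q p\<bar> * path_mat w D a l p j)" if "q < w" for q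
  proof -
    have "(\<Sum>p<Suc (Suc (2*D)). \<bar>pW ?c (Suc l) q p\<bar> * ?H p) = (\<Sum>p<D. \<bar>pW a (Suc l) q p\<bar> * ?H p)" by (rule inner_a_abs[OF that ne])
    also have "\<dots> = (\<Sum>p<D. \<bar>pW a (Suc l) q p\<bar> * path_mat w D a l p j)" by (rule sum.cong) (use IH in \<open>simp_all del: path_mat.simps\<close>)
    finally show ?thesis .
  qed
  have ib: "(\<Sum>p<Suc (Suc (2*D)). \<bar>pW ?c (Suc l) (q+w) p\<bar> * ?H p) = (\<Sum>p<D. \<bar>pW b (Suc l) q p\<bar> * path_mat w D b l p j)" if "q < w" for q
  proof -
    have "(\<Sum>p<Suc (Suc (2*D)). \<bar>pW ?c (Suc l) (q+w) p\<bar> * ?H p) = (\<Sum>p<D. \<bar>pW b (Suc l) q p\<bar> * ?H (p+D))" by (rule inner_b_abs[OF that ne])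
    also have "\<dots> = (\<Sum>p<D. \<bar>pW b (Suc l) q p\<bar> * path_mat w D b l p j)" by (rule sum.cong) (use IH in \<open>simp_all del: path_mat.simps\<close>)
    finally show ?thesis .
  qed
  have "path_mat (2*w) (Suc (Suc (2*D))) ?c (Suc l) i j = ?H i + 3 *
    ((\<Sum>q<w. \<bar>pU ?c (Suc l) i q\<bar> * (\<Sum>p<Suc (Suc (2*D)). \<bar>pW ?c (Suc l) q p\<bar> * ?H p)) +
     (\<Sum>q<w. \<bar>pU ?c (Suc l) i (q+w)\<bar> * (\<Sum>p<Suc (Suc (2*D)). \<bar>pW ?c (Suc l) (q+w) p\<bar> * ?H p)))"
    by (simp only: path_mat.simps sumw)
  also have "\<dots> = ?H i + 3 *
    ((\<Sum>q<w. \<bar>pU ?c (Suc l) i q\<bar> * (\<Sum>p<D. \<bar>pW a (Suc l) q p\<bar> * path_mat w D a l p j)) +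
     (\<Sum>q<w. \<bar>pU ?c (Suc l) i (q+w)\<bar> * (\<Sum>p<D. \<bar>pW b (Suc l) q p\<bar> * path_mat w D b l p j)))"
  proof -
    have "(\<Sum>q<w. \<bar>pU ?c (Suc l) i q\<bar> * (\<Sum>p<Suc (Suc (2*D)). \<bar>pW ?c (Suc l) q p\<bar> * ?H p)) =
      (\<Sum>q<w. \<bar>pU ?c (Suc l) i q\<bar> * (\<Sum>p<D. \<bar>pW a (Suc l) q p\<bar> * path_mat w D a l p j))"
      by (rule sum.cong) (simp_all only: lessThan_iff ia)
    moreover have "(\<Sum>q<w. \<bar>pU ?c (Suc l) i (q+w)\<bar> * (\<Sum>p<Suc (Suc (2*D)). \<bar>pW ?c (Suc l) (q+w) p\<bar> * ?H p)) =
      (\<Sum>q<w. \<bar>pU ?c (Suc l) i (q+w)\<bar> * (\<Sum>p<D. \<bar>pW b (Suc l) q p\<bar> * path_mat w D b l p j))"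
      by (rule sum.cong) (simp_all only: lessThan_iff ib)
    ultimately show ?thesis by (simp only:)
  qed
  also have "\<dots> = (if i < D then path_mat w D a (Suc l) i j else if i < 2*D then path_mat w D b (Suc l) (i-D) j else 0)"
  proof (cases "i < D")
    case True
    then show ?thesis using ne by (simp add: IH pU_ca pU_ca0 del: path_mat.simps) simp
  next
    case F: False
    show ?thesis
    proof (cases "i < 2*D")
      case True
      then show ?thesis using ne F by (simp add: IH pU_cb pU_cb0 del: path_mat.simps) simp
    next
      case False
      then show ?thesis using ne F by (simp add: IH pU_c0 del: path_mat.simps)
    qed
  qed
  finally show ?case .
qed

lemma comb_top_inner_abs:
  fixes H :: "nat \<Rightarrow> real"
  shows "(\<Sum>p<Suc (Suc (2*D)). \<bar>pW (comb L D w a b) (Suc L) 0 p\<bar> * H p) = (\<Sum>p<D. \<bar>pu a p\<bar> * H p) + (\<Sum>p<D. \<bar>pu b p\<bar> * H (p+D))"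
    and "(\<Sum>p<Suc (Suc (2*D)). \<bar>pW (comb L D w a b) (Suc L) (Suc 0) p\<bar> * H p) = (\<Sum>p<D. \<bar>pu a p\<bar> * H p) + (\<Sum>p<D. \<bar>pu b p\<bar> * H (p+D))"
  by (simp_all only: sum2 comb_top_W0 comb_top_W1) simp_all

lemma comb_path_top:
  assumes w: "0 < w"
  shows "path_mat (2*w) (Suc (Suc (2*D))) (comb L D w a b) (Suc L) i j =
   (if i < D then path_mat w D a L i j else if i < 2*D then path_mat w D b L (i-D) j
    else if i = 2*D \<or> i = Suc (2*D) then 3 * ((\<Sum>p<D. \<bar>pu a p\<bar> * path_mat w D a L p j) + (\<Sum>p<D. \<bar>pu b p\<bar> * path_mat w D b L p j))
    else 0)"
proof -
  let ?c = "comb L D w a b"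
  let ?H = "\<lambda>p. path_mat (2*w) (Suc (Suc (2*D))) ?c L p j"
  let ?T = "(\<Sum>p<D. \<bar>pu a p\<bar> * path_mat w D a L p j) + (\<Sum>p<D. \<bar>pu b p\<bar> * path_mat w D b L p j)"
  have H: "?H p = (if p < D then path_mat w D a L p j else if p < 2*D then path_mat w D b L (p-D) j else 0)" for p
    by (rule comb_path) simp
  have i0: "(\<Sum>p<Suc (Suc (2*D)). \<bar>pW ?c (Suc L) q p\<bar> * ?H p) = ?T" if "q = 0 \<or> q = Suc 0" for q
    using that by (auto simp only: comb_top_inner_abs intro!: arg_cong2[where f="(+)"] sum.cong) (simp_all add: H del: path_mat.simps)
  let ?G = "\<lambda>q. (\<Sum>p<Suc (Suc (2*D)). \<bar>pW ?c (Suc L) q p\<bar> * ?H p)"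
  have "(\<Sum>q<2*w. \<bar>pU ?c (Suc L) i q\<bar> * ?G q) = (\<Sum>q<2*w. (if q = 0 then (if i = 2*D then ?G 0 else 0) else 0)
         + (if q = Suc 0 then (if i = Suc (2*D) then ?G (Suc 0) else 0) else 0))"
    by (rule sum.cong) (auto simp: comb_top_U)
  also have "\<dots> = (if i = 2*D then ?G 0 else 0) + (if i = Suc (2*D) then ?G (Suc 0) else 0)"
    using w by (simp add: sum.distrib)
  finally have S: "(\<Sum>q<2*w. \<bar>pU ?c (Suc L) i q\<bar> * ?G q) = (if i = 2*D then ?G 0 else 0) + (if i = Suc (2*D) then ?G (Suc 0) else 0)" .
  have "path_mat (2*w) (Suc (Suc (2*D))) ?c (Suc L) i j = ?H i + 3 * (\<Sum>q<2*w. \<bar>pU ?c (Suc L) i q\<bar> * ?G q)"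
    by (simp only: path_mat.simps)
  also have "\<dots> = ?H i + 3 * ((if i = 2*D then ?G 0 else 0) + (if i = Suc (2*D) then ?G (Suc 0) else 0))"
    by (simp only: S)
  also have "\<dots> = ?H i + 3 * ((if i = 2*D then ?T else 0) + (if i = Suc (2*D) then ?T else 0))"
    by (simp only: i0[of 0] i0[of "Suc 0"] simp_thms)
  also have "\<dots> = (if i < D then path_mat w D a L i j else if i < 2*D then path_mat w D b L (i-D) j
    else if i = 2*D \<or> i = Suc (2*D) then 3 * ?T else 0)"
    by (simp add: H del: path_mat.simps)
  finally show ?thesis .
qed

lemma comb_path_norm:
  assumes w: "0 < w"
  shows "path_norm (2*w) (Suc (Suc (2*D))) (Suc L) (comb L D w a b) = 7/2 * (path_norm w D L a + path_norm w D L b)"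
proof -
  let ?c = "comb L D w a b"
  let ?P = "\<lambda>i j. path_mat (2*w) (Suc (Suc (2*D))) ?c (Suc L) i j"
  let ?Ta = "\<lambda>j. (\<Sum>p<D. \<bar>pu a p\<bar> * path_mat w D a L p j)"
  let ?Tb = "\<lambda>j. (\<Sum>p<D. \<bar>pu b p\<bar> * path_mat w D b L p j)"
  have nna: "?Ta j \<ge> 0" "?Tb j \<ge> 0" for j by (auto intro!: sum_nonneg mult_nonneg_nonneg path_mat_nonneg)
  have "(\<Sum>i<Suc (Suc (2*D)). \<bar>pu ?c i\<bar> * ?P i j) =
     (\<Sum>p<D. \<bar>pu ?c p\<bar> * ?P p j) + (\<Sum>p<D. \<bar>pu ?c (p+D)\<bar> * ?P (p+D) j) + \<bar>pu ?c (2*D)\<bar> * ?P (2*D) j + \<bar>pu ?c (Suc (2*D))\<bar> * ?P (Suc (2*D)) j" for j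
    by (rule sum2)
  also have "\<dots> j = (\<Sum>p<D. \<bar>pu a p\<bar> / 2 * path_mat w D a L p j) + (\<Sum>p<D. \<bar>pu b p\<bar> / 2 * path_mat w D b L p j)
      + 1/2 * (3 * (?Ta j + ?Tb j)) + 1/2 * (3 * (?Ta j + ?Tb j))" for j
    apply (intro arg_cong2[where f="(+)"] sum.cong refl)
    apply (simp_all only: lessThan_iff pu_c comb_path_top[OF w])
    apply (simp_all del: path_mat.simps)
    done
  also have "\<dots> j = 7/2 * (?Ta j + ?Tb j)" for j by (simp add: sum_divide_distrib[symmetric] del: path_mat.simps)
  finally have E: "(\<Sum>i<Suc (Suc (2*D)). \<bar>pu ?c i\<bar> * ?P i j) = 7/2 * (?Ta j + ?Tb j)" for j .
  have "path_norm (2*w) (Suc (Suc (2*D))) (Suc L) ?c = (\<Sum>j\<in>UNIV. 7/2 * (?Ta j + ?Tb j))"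
    unfolding path_norm_def E using nna by (simp del: path_mat.simps)
  also have "\<dots> = 7/2 * (path_norm w D L a + path_norm w D L b)"
  proof -
    have "(\<Sum>j\<in>UNIV. 7/2 * (?Ta j + ?Tb j)) = 7/2 * ((\<Sum>j\<in>UNIV. ?Ta j) + (\<Sum>j\<in>UNIV. ?Tb j))"
      by (simp only: sum_distrib_left[symmetric] sum.distrib)
    moreover have "path_norm w D L a = (\<Sum>j\<in>UNIV. ?Ta j)" "path_norm w D L b = (\<Sum>j\<in>UNIV. ?Tb j)"
      unfolding path_norm_def using nna by (simp_all del: path_mat.simps)
    ultimately show ?thesis by simp
  qed
  finally show ?thesis .
qed


section \<open>Tree\<close>

primrec Dk :: "nat \<Rightarrow> nat \<Rightarrow> nat" where
  "Dk m 0 = Suc m"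
| "Dk m (Suc k) = Suc (Suc (2 * Dk m k))"

primrec tmax :: "(nat \<Rightarrow> real) \<Rightarrow> nat \<Rightarrow> nat \<Rightarrow> real" where
  "tmax F 0 b = F (Suc b)"
| "tmax F (Suc k) b = max (tmax F k b) (tmax F k (b + 2^k))"

lemma ivl_split: "{(b::nat)<..b + 2^Suc k} = {b<..b+2^k} \<union> {b+2^k<..(b+2^k)+2^k}"
  by auto

lemma tmax_Max: "tmax F k b = Max (F ` {b<..b+2^k})"
proof (induction k arbitrary: b)
  case 0
  have "{b<..b + 2^0} = {Suc b}" by auto
  then show ?case by simp
next
  case (Suc k)
  have ne: "{b<..b+2^k} \<noteq> {}" "{b+2^k<..(b+2^k)+2^k} \<noteq> {}" by auto
  show ?case unfolding ivl_split image_Un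
    by (simp add: Max_Un ne Suc)
qed

lemma tree_net:
  assumes m: "0 < m"
    and leaves: "\<And>i. b < i \<Longrightarrow> i \<le> b + 2^k \<Longrightarrow> \<exists>\<theta>. uzero m \<theta> \<and> (\<forall>x. resnet m (Suc m) (Suc 0) \<theta> x = F i x)
                  \<and> path_norm m (Suc m) (Suc 0) \<theta> \<le> P i"
  shows "\<exists>\<theta>::'d::finite resnet_params. uzero (2^k*m) \<theta> \<and> (\<forall>x. resnet (2^k*m) (Dk m k) (Suc k) \<theta> x = tmax (\<lambda>i. F i x) k b)
     \<and> path_norm (2^k*m) (Dk m k) (Suc k) \<theta> \<le> (7/2)^k * (\<Sum>i\<in>{b<..b+2^k}. P i)"
  using leaves
proof (induction k arbitrary: b)
  case 0
  obtain \<theta> :: "'d resnet_params" where t: "uzero m \<theta>" "\<forall>x. resnet m (Suc m) (Suc 0) \<theta> x = F (Suc b) x"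
     "path_norm m (Suc m) (Suc 0) \<theta> \<le> P (Suc b)" using "0.prems"[of "Suc b"] by auto
  have "{b<..b + 2^0} = {Suc b}" by auto
  then show ?case using t by (intro exI[of _ \<theta>]) simp
next
  case (Suc k)
  obtain ta :: "'d resnet_params" where ta: "uzero (2^k*m) ta" "\<forall>x. resnet (2^k*m) (Dk m k) (Suc k) ta x = tmax (\<lambda>i. F i x) k b"
     "path_norm (2^k*m) (Dk m k) (Suc k) ta \<le> (7/2)^k * (\<Sum>i\<in>{b<..b+2^k}. P i)"
    using Suc.IH[of b] Suc.prems by auto
  obtain tb :: "'d resnet_params" where tb: "uzero (2^k*m) tb" "\<forall>x. resnet (2^k*m) (Dk m k) (Suc k) tb x = tmax (\<lambda>i. F i x) k (b+2^k)"
     "path_norm (2^k*m) (Dk m k) (Suc k) tb \<le> (7/2)^k * (\<Sum>i\<in>{b+2^k<..(b+2^k)+2^k}. P i)"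
    using Suc.IH[of "b+2^k"] Suc.prems by auto
  let ?w = "2^k*m"
  have w: "0 < ?w" using m by simp
  have ww: "2^Suc k * m = 2 * ?w" by simp
  let ?t = "comb (Suc k) (Dk m k) ?w ta tb"
  have "uzero (2^Suc k * m) ?t" unfolding ww by (rule comb_uzero[OF w])
  moreover have "\<forall>x. resnet (2^Suc k*m) (Dk m (Suc k)) (Suc (Suc k)) ?t x = tmax (\<lambda>i. F i x) (Suc k) b"
    unfolding ww Dk.simps by (simp add: comb_resnet[OF w] ta tb del: resnet_hidden.simps)
  moreover have "path_norm (2^Suc k*m) (Dk m (Suc k)) (Suc (Suc k)) ?t \<le> (7/2)^Suc k * (\<Sum>i\<in>{b<..b+2^Suc k}. P i)"
  proof -
    have d: "{b<..b+2^k} \<inter> {b+2^k<..(b+2^k)+2^k} = {}" by auto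
    have "path_norm (2^Suc k*m) (Dk m (Suc k)) (Suc (Suc k)) ?t = 7/2 * (path_norm ?w (Dk m k) (Suc k) ta + path_norm ?w (Dk m k) (Suc k) tb)"
      unfolding ww Dk.simps by (rule comb_path_norm[OF w])
    also have "\<dots> \<le> 7/2 * ((7/2)^k * (\<Sum>i\<in>{b<..b+2^k}. P i) + (7/2)^k * (\<Sum>i\<in>{b+2^k<..(b+2^k)+2^k}. P i))"
      using ta(3) tb(3) by simp
    also have "\<dots> = (7/2)^Suc k * (\<Sum>i\<in>{b<..b+2^Suc k}. P i)"
      unfolding ivl_split by (simp add: sum.union_disjoint d algebra_simps)
    finally show ?thesis .
  qed
  ultimately show ?case by blast
qed



definition gfun :: "real \<times> (real^'d::finite) \<Rightarrow> real^'d \<Rightarrow> real" where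
  "gfun \<theta> x = fst \<theta> * relu (snd \<theta> \<bullet> x)"

definition aa :: "real \<times> (real^'d::finite) \<Rightarrow> real" where
  "aa \<theta> = \<bar>fst \<theta>\<bar> * l1norm (snd \<theta>)"

lemma continuous_on_relu [continuous_intros]: "continuous_on A f \<Longrightarrow> continuous_on A (\<lambda>x. relu (f x))"
  unfolding relu_def by (intro continuous_intros)

lemma continuous_relu [continuous_intros]: "continuous F f \<Longrightarrow> continuous F (\<lambda>x. relu (f x))"
  unfolding relu_def by (intro continuous_intros)

lemma cont_gfun: "continuous_on A (gfun \<theta>)"
  unfolding gfun_def by (intro continuous_intros)

lemma cont_gfun2: "continuous_on UNIV (\<lambda>p::(real^'d::finite) \<times> (real \<times> (real^'d)). gfun (snd p) (fst p))"
  unfolding gfun_def by (intro continuous_intros)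

lemma cont_aa: "continuous_on UNIV (aa :: real \<times> (real^'d::finite) \<Rightarrow> real)"
  unfolding aa_def l1norm_def by (intro continuous_intros)

lemma relu_le_l1:
  assumes "\<forall>i. 0 \<le> x $ i \<and> x $ i \<le> 1"
  shows "relu (w \<bullet> x) \<le> l1norm (w::real^'d::finite)"
proof -
  have "w \<bullet> x = (\<Sum>j\<in>UNIV. w $ j * x $ j)" by (simp add: inner_vec_def)
  also have "\<dots> \<le> (\<Sum>j\<in>UNIV. \<bar>w $ j\<bar>)"
  proof (rule sum_mono)
    fix j
    have "w $ j * x $ j \<le> \<bar>w $ j * x $ j\<bar>" by simp
    also have "\<dots> = \<bar>w $ j\<bar> * x $ j" using assms by (simp add: abs_mult)
    also have "\<dots> \<le> \<bar>w $ j\<bar>" using assms by (simp add: mult_left_le)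
    finally show "w $ j * x $ j \<le> \<bar>w $ j\<bar>" .
  qed
  finally show ?thesis unfolding relu_def l1norm_def by (auto intro: sum_nonneg)
qed

lemma abs_gfun_le: "\<forall>i. 0 \<le> x $ i \<and> x $ i \<le> 1 \<Longrightarrow> \<bar>gfun \<theta> x\<bar> \<le> aa \<theta>"
  unfolding gfun_def aa_def using relu_le_l1[of x "snd \<theta>"]
  by (simp add: abs_mult relu_nonneg mult_left_mono)

lemma aa_nonneg: "aa \<theta> \<ge> 0" unfolding aa_def l1norm_def by (auto intro!: sum_nonneg)

definition SI :: "'a set \<Rightarrow> ('a::euclidean_space \<Rightarrow> real) \<Rightarrow> real" where
  "SI S f = (\<integral>x. indicator S x * f x \<partial>lborel)"

lemma SIable: "compact S \<Longrightarrow> continuous_on S f \<Longrightarrow> integrable lborel (\<lambda>x. indicator S x * f x :: real)"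
  using borel_integrable_compact[of S f] by simp

lemma SI_add: "integrable lborel (\<lambda>x. indicator S x * f x) \<Longrightarrow> integrable lborel (\<lambda>x. indicator S x * g x)
   \<Longrightarrow> SI S (\<lambda>x. f x + g x) = SI S f + SI S g"
  unfolding SI_def by (simp add: distrib_left)

lemma SI_cmult: "SI S (\<lambda>x. a * f x) = a * SI S f"
  unfolding SI_def by (simp add: mult.left_commute)

lemma SI_mono: "integrable lborel (\<lambda>x. indicator S x * f x) \<Longrightarrow> integrable lborel (\<lambda>x. indicator S x * g x)
   \<Longrightarrow> (\<And>x. x \<in> S \<Longrightarrow> f x \<le> g x) \<Longrightarrow> SI S f \<le> SI S (g :: _ \<Rightarrow> real)"
  unfolding SI_def by (rule integral_mono) (auto simp: indicator_def)

lemma SI_nonneg: "(\<And>x. x \<in> S \<Longrightarrow> 0 \<le> f x) \<Longrightarrow> 0 \<le> SI S f"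
  unfolding SI_def by (rule integral_nonneg_AE) (auto simp: indicator_def)

lemma SI_const: "S \<in> sets lborel \<Longrightarrow> SI S (\<lambda>x. a) = measure lborel S * a"
  unfolding SI_def by simp

lemma cont_bounded: "compact S \<Longrightarrow> continuous_on S (f::_ \<Rightarrow> real) \<Longrightarrow> \<exists>C. \<forall>x\<in>S. \<bar>f x\<bar> \<le> C"
  using compact_imp_bounded[OF compact_continuous_image[of S f]] by (auto simp: bounded_iff)

locale barron_setting =
  fixes S :: "(real^'d::finite) set" and h :: "real^'d \<Rightarrow> real" and \<rho> :: "(real \<times> (real^'d)) measure"
  assumes S_compact: "compact S"
    and S_cube: "\<forall>x\<in>S. \<forall>i. 0 \<le> x $ i \<and> x $ i \<le> 1"
    and rho_prob: "prob_space \<rho>"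
    and rho_sets: "sets \<rho> = sets borel"
    and rep: "\<And>x. x \<in> S \<Longrightarrow> integrable \<rho> (\<lambda>\<theta>. gfun \<theta> x) \<and> h x = (\<integral>\<theta>. gfun \<theta> x \<partial>\<rho>)"
    and mom: "integrable \<rho> (\<lambda>\<theta>. (aa \<theta>)\<^sup>2)"
    and h_cont: "continuous_on S h"
begin

interpretation rho: prob_space \<rho> by (rule rho_prob)

interpretation P: pair_sigma_finite lborel \<rho>
  by (intro pair_sigma_finite.intro lborel.sigma_finite_measure_axioms rho.sigma_finite_measure_axioms)

lemma S_borel: "S \<in> sets borel" using S_compact by (simp add: compact_imp_closed borel_closed)

lemma space_rho: "space \<rho> = UNIV" using rho_sets by (metis sets_eq_imp_space_eq space_borel)

lemma meas_rho[measurable_cong]: "sets \<rho> = sets borel" by (rule rho_sets)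

lemma aa_meas: "aa \<in> borel_measurable \<rho>"
  using borel_measurable_continuous_onI[OF cont_aa] measurable_cong_sets[OF rho_sets refl] by blast

lemma aa_integrable: "integrable \<rho> aa"
proof (rule Bochner_Integration.integrable_bound[where f="\<lambda>\<theta>. (aa \<theta>)\<^sup>2 + 1"])
  show "integrable \<rho> (\<lambda>\<theta>. (aa \<theta>)\<^sup>2 + 1)" using mom by simp
  show "aa \<in> borel_measurable \<rho>" by (rule aa_meas)
  show "AE x in \<rho>. norm (aa x) \<le> norm ((aa x)\<^sup>2 + 1)"
  proof (rule AE_I2)
    fix x
    have "0 \<le> (aa x - 1)\<^sup>2" by simp
    then have "2 * aa x \<le> (aa x)\<^sup>2 + 1" by (simp add: power2_eq_square algebra_simps)
    then have "aa x \<le> (aa x)\<^sup>2 + 1" using aa_nonneg[of x] by linarith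
    then show "norm (aa x) \<le> norm ((aa x)\<^sup>2 + 1)" using aa_nonneg[of x] by simp
  qed
qed

lemma gfun_meas2: "(\<lambda>p. gfun (snd p) (fst p)) \<in> borel_measurable (lborel \<Otimes>\<^sub>M \<rho>)"
proof -
  have "(\<lambda>p. gfun (snd p) (fst p)) \<in> borel_measurable (borel \<Otimes>\<^sub>M borel :: ((real^'d) \<times> (real \<times> (real^'d))) measure)"
    unfolding borel_prod by (rule borel_measurable_continuous_onI[OF cont_gfun2])
  moreover have "sets (lborel \<Otimes>\<^sub>M \<rho>) = sets (borel \<Otimes>\<^sub>M borel :: ((real^'d) \<times> (real \<times> (real^'d))) measure)"
    by (rule sets_pair_measure_cong) (simp_all add: rho_sets)
  ultimately show ?thesis using measurable_cong_sets by blast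
qed

lemma gfun_meas2': "(\<lambda>p. gfun (fst p) (snd p)) \<in> borel_measurable (\<rho> \<Otimes>\<^sub>M lborel)"
proof -
  have "(\<lambda>p. gfun (fst p) (snd p)) \<in> borel_measurable (borel \<Otimes>\<^sub>M borel :: ((real \<times> (real^'d)) \<times> (real^'d)) measure)"
    unfolding borel_prod gfun_def by (rule borel_measurable_continuous_onI) (intro continuous_intros)
  moreover have "sets (\<rho> \<Otimes>\<^sub>M lborel) = sets (borel \<Otimes>\<^sub>M borel :: ((real \<times> (real^'d)) \<times> (real^'d)) measure)"
    by (rule sets_pair_measure_cong) (simp_all add: rho_sets)
  ultimately show ?thesis using measurable_cong_sets by blast
qed

lemma ind_meas: "continuous_on S (c::_ \<Rightarrow> real) \<Longrightarrow> (\<lambda>x. indicator S x * c x) \<in> borel_measurable lborel"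
  using borel_measurable_continuous_on_indicator[OF S_borel, of c] by simp

lemma K:
  assumes c: "continuous_on S c"
  shows "integrable \<rho> (\<lambda>\<theta>. SI S (\<lambda>x. c x * gfun \<theta> x))"
    and "(\<integral>\<theta>. SI S (\<lambda>x. c x * gfun \<theta> x) \<partial>\<rho>) = SI S (\<lambda>x. c x * h x)"
proof -
  obtain C where C: "\<forall>x\<in>S. \<bar>c x\<bar> \<le> C" using cont_bounded[OF S_compact c] by blast
  define A where "A = (\<integral>\<theta>. aa \<theta> \<partial>\<rho>)"
  define f where "f = (\<lambda>x \<theta>. (indicator S x * c x) * gfun \<theta> x)"
  have m1: "(\<lambda>p. indicator S (fst p) * c (fst p)) \<in> borel_measurable (lborel \<Otimes>\<^sub>M \<rho>)"
    by (rule measurable_compose[OF measurable_fst ind_meas[OF c]])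
  have meas: "case_prod f \<in> borel_measurable (lborel \<Otimes>\<^sub>M \<rho>)"
  proof -
    have "(\<lambda>p. (indicator S (fst p) * c (fst p)) * gfun (snd p) (fst p)) \<in> borel_measurable (lborel \<Otimes>\<^sub>M \<rho>)"
      by (rule borel_measurable_times[OF m1 gfun_meas2])
    moreover have "case_prod f = (\<lambda>p. (indicator S (fst p) * c (fst p)) * gfun (snd p) (fst p))"
      by (auto simp: f_def)
    ultimately show ?thesis by simp
  qed
  have intS: "integrable \<rho> (\<lambda>\<theta>. f x \<theta>)" for x
    by (cases "x \<in> S") (auto simp: f_def rep)
  have inner_norm: "(\<integral>\<theta>. norm (case_prod f (x, \<theta>)) \<partial>\<rho>) \<le> indicator S x * (C * A)" for x
  proof (cases "x \<in> S")
    case True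
    have "(\<integral>\<theta>. norm (case_prod f (x, \<theta>)) \<partial>\<rho>) = (\<integral>\<theta>. \<bar>c x\<bar> * \<bar>gfun \<theta> x\<bar> \<partial>\<rho>)"
      using True by (simp add: f_def abs_mult)
    also have "\<dots> = \<bar>c x\<bar> * (\<integral>\<theta>. \<bar>gfun \<theta> x\<bar> \<partial>\<rho>)" by simp
    also have "\<dots> \<le> C * A"
    proof (rule mult_mono)
      show "\<bar>c x\<bar> \<le> C" using C True by simp
      show "(\<integral>\<theta>. \<bar>gfun \<theta> x\<bar> \<partial>\<rho>) \<le> A" unfolding A_def
        using True rep[OF True] aa_integrable S_cube by (intro integral_mono) (auto intro!: abs_gfun_le)
      show "0 \<le> C" using C True by (meson abs_ge_zero order_trans)
      show "0 \<le> (\<integral>\<theta>. \<bar>gfun \<theta> x\<bar> \<partial>\<rho>)" by simp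
    qed
    finally show ?thesis using True by simp
  next
    case False then show ?thesis by (simp add: f_def)
  qed
  have integ1: "integrable lborel (\<lambda>x. \<integral>\<theta>. norm (case_prod f (x, \<theta>)) \<partial>\<rho>)"
  proof (rule Bochner_Integration.integrable_bound[where f="\<lambda>x. indicator S x * (C * A)"])
    show "integrable lborel (\<lambda>x. indicator S x * (C * A))"
      using S_compact S_borel by (intro integrable_mult_left integrable_real_indicator) (use emeasure_compact_finite[OF S_compact] in auto)
    show "(\<lambda>x. \<integral>\<theta>. norm (case_prod f (x, \<theta>)) \<partial>\<rho>) \<in> borel_measurable lborel"
      using meas by (intro rho.borel_measurable_lebesgue_integral) (simp add: split_beta')
    show "AE x in lborel. norm (\<integral>\<theta>. norm (case_prod f (x, \<theta>)) \<partial>\<rho>) \<le> norm (indicator S x * (C * A))"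
    proof (rule AE_I2)
      fix x
      have "0 \<le> (\<integral>\<theta>. norm (case_prod f (x, \<theta>)) \<partial>\<rho>)" by simp
      then show "norm (\<integral>\<theta>. norm (case_prod f (x, \<theta>)) \<partial>\<rho>) \<le> norm (indicator S x * (C * A))"
        using inner_norm[of x] by simp
    qed
  qed
  have intg: "integrable (lborel \<Otimes>\<^sub>M \<rho>) (case_prod f)"
    by (rule P.Fubini_integrable[OF meas integ1]) (simp add: intS)
  have eqSI: "SI S (\<lambda>x. c x * gfun \<theta> x) = (\<integral>x. f x \<theta> \<partial>lborel)" for \<theta>
    unfolding SI_def f_def by (simp add: mult.assoc)
  show "integrable \<rho> (\<lambda>\<theta>. SI S (\<lambda>x. c x * gfun \<theta> x))"
    unfolding eqSI by (rule P.integrable_snd[OF intg])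
  have inner: "(\<integral>\<theta>. f x \<theta> \<partial>\<rho>) = indicator S x * (c x * h x)" for x
    by (cases "x \<in> S") (simp_all add: f_def rep)
  show "(\<integral>\<theta>. SI S (\<lambda>x. c x * gfun \<theta> x) \<partial>\<rho>) = SI S (\<lambda>x. c x * h x)"
  proof -
    have "(\<integral>\<theta>. SI S (\<lambda>x. c x * gfun \<theta> x) \<partial>\<rho>) = (\<integral>\<theta>. (\<integral>x. f x \<theta> \<partial>lborel) \<partial>\<rho>)" by (simp only: eqSI)
    also have "\<dots> = (\<integral>x. (\<integral>\<theta>. f x \<theta> \<partial>\<rho>) \<partial>lborel)" by (rule P.Fubini_integral[OF intg])
    also have "\<dots> = SI S (\<lambda>x. c x * h x)" by (simp only: inner SI_def)
    finally show ?thesis .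
  qed
qed

lemma G2:
  shows "integrable \<rho> (\<lambda>\<theta>. SI S (\<lambda>x. (gfun \<theta> x)\<^sup>2))"
    and "\<And>\<theta>. SI S (\<lambda>x. (gfun \<theta> x)\<^sup>2) \<le> measure lborel S * (aa \<theta>)\<^sup>2"
    and "\<And>\<theta>. 0 \<le> SI S (\<lambda>x. (gfun \<theta> x)\<^sup>2)"
proof -
  have bnd: "SI S (\<lambda>x. (gfun \<theta> x)\<^sup>2) \<le> measure lborel S * (aa \<theta>)\<^sup>2" for \<theta>
  proof -
    have "SI S (\<lambda>x. (gfun \<theta> x)\<^sup>2) \<le> SI S (\<lambda>x. (aa \<theta>)\<^sup>2)"
    proof (rule SI_mono)
      show "integrable lborel (\<lambda>x. indicator S x * (gfun \<theta> x)\<^sup>2)"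
        by (rule SIable[OF S_compact]) (intro continuous_intros cont_gfun)
      show "integrable lborel (\<lambda>x. indicator S x * (aa \<theta>)\<^sup>2)"
        by (rule SIable[OF S_compact]) (intro continuous_intros)
      fix x assume "x \<in> S"
      then have "\<bar>gfun \<theta> x\<bar> \<le> aa \<theta>" using S_cube abs_gfun_le by blast
      then show "(gfun \<theta> x)\<^sup>2 \<le> (aa \<theta>)\<^sup>2" by (metis abs_le_square_iff abs_of_nonneg aa_nonneg)
    qed
    also have "\<dots> = measure lborel S * (aa \<theta>)\<^sup>2" using S_borel by (simp add: SI_const)
    finally show ?thesis .
  qed
  show nn: "0 \<le> SI S (\<lambda>x. (gfun \<theta> x)\<^sup>2)" for \<theta> by (rule SI_nonneg) simp
  show "SI S (\<lambda>x. (gfun \<theta> x)\<^sup>2) \<le> measure lborel S * (aa \<theta>)\<^sup>2" for \<theta> by (rule bnd)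
  show "integrable \<rho> (\<lambda>\<theta>. SI S (\<lambda>x. (gfun \<theta> x)\<^sup>2))"
  proof (rule Bochner_Integration.integrable_bound[where f="\<lambda>\<theta>. measure lborel S * (aa \<theta>)\<^sup>2"])
    show "integrable \<rho> (\<lambda>\<theta>. measure lborel S * (aa \<theta>)\<^sup>2)" using mom by simp
    have m: "(\<lambda>p. indicator S (snd p) * (gfun (fst p) (snd p))\<^sup>2) \<in> borel_measurable (\<rho> \<Otimes>\<^sub>M lborel)"
    proof (rule borel_measurable_times)
      show "(\<lambda>p. indicator S (snd p) :: real) \<in> borel_measurable (\<rho> \<Otimes>\<^sub>M lborel)"
        by (rule measurable_compose[OF measurable_snd], rule borel_measurable_indicator) (simp add: S_borel)
      show "(\<lambda>p. (gfun (fst p) (snd p))\<^sup>2) \<in> borel_measurable (\<rho> \<Otimes>\<^sub>M lborel)"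
        by (rule borel_measurable_power[OF gfun_meas2'])
    qed
    show "(\<lambda>\<theta>. SI S (\<lambda>x. (gfun \<theta> x)\<^sup>2)) \<in> borel_measurable \<rho>"
      unfolding SI_def using m by (intro lborel.borel_measurable_lebesgue_integral) (simp add: split_beta')
    show "AE x in \<rho>. norm (SI S (\<lambda>xa. (gfun x xa)\<^sup>2)) \<le> norm (measure lborel S * (aa x)\<^sup>2)"
    proof (rule AE_I2)
      fix \<theta> :: "real \<times> (real^'d)"
      have "0 \<le> measure lborel S * (aa \<theta>)\<^sup>2" by simp
      then show "norm (SI S (\<lambda>xa. (gfun \<theta> xa)\<^sup>2)) \<le> norm (measure lborel S * (aa \<theta>)\<^sup>2)"
        using bnd[of \<theta>] nn[of \<theta>] by simp
    qed
  qed
qed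

lemma SIc: "continuous_on S (f :: _ \<Rightarrow> real) \<Longrightarrow> integrable lborel (\<lambda>x. indicator S x * f x)"
  by (rule SIable[OF S_compact])

lemma step:
  assumes c: "continuous_on S c" and lam: "0 \<le> lm" and e: "0 < \<epsilon>"
  shows "\<exists>\<theta>. SI S (\<lambda>x. (c x + gfun \<theta> x - h x)\<^sup>2) + lm * aa \<theta> \<le>
     SI S (\<lambda>x. (c x)\<^sup>2) + measure lborel S * (\<integral>\<theta>. (aa \<theta>)\<^sup>2 \<partial>\<rho>) + lm * (\<integral>\<theta>. aa \<theta> \<partial>\<rho>) + \<epsilon>"
proof -
  define c' where "c' = (\<lambda>x. c x - h x)"
  have cc: "continuous_on S c'" unfolding c'_def by (intro continuous_intros c h_cont)
  have cg: "continuous_on S (gfun \<theta>)" for \<theta> by (rule cont_gfun)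
  define B where "B = SI S (\<lambda>x. (c x)\<^sup>2) + measure lborel S * (\<integral>\<theta>. (aa \<theta>)\<^sup>2 \<partial>\<rho>) + lm * (\<integral>\<theta>. aa \<theta> \<partial>\<rho>)"
  define \<Phi> where "\<Phi> = (\<lambda>\<theta>. SI S (\<lambda>x. (c' x)\<^sup>2) + 2 * SI S (\<lambda>x. c' x * gfun \<theta> x) + SI S (\<lambda>x. (gfun \<theta> x)\<^sup>2) + lm * aa \<theta>)"
  have eqP: "SI S (\<lambda>x. (c x + gfun \<theta> x - h x)\<^sup>2) + lm * aa \<theta> = \<Phi> \<theta>" for \<theta>
  proof -
    have "SI S (\<lambda>x. (c x + gfun \<theta> x - h x)\<^sup>2) = SI S (\<lambda>x. (c' x)\<^sup>2 + (2 * (c' x * gfun \<theta> x) + (gfun \<theta> x)\<^sup>2))"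
      unfolding c'_def by (simp add: power2_eq_square algebra_simps)
    also have "\<dots> = SI S (\<lambda>x. (c' x)\<^sup>2) + (2 * SI S (\<lambda>x. c' x * gfun \<theta> x) + SI S (\<lambda>x. (gfun \<theta> x)\<^sup>2))"
      by (subst SI_add, (intro SIc continuous_intros cc cg)+, subst SI_add, (intro SIc continuous_intros cc cg)+)
         (simp add: SI_cmult)
    finally show ?thesis unfolding \<Phi>_def by simp
  qed
  have intP: "integrable \<rho> \<Phi>"
    unfolding \<Phi>_def using K(1)[OF cc] G2(1) aa_integrable by simp
  have "(\<integral>\<theta>. \<Phi> \<theta> \<partial>\<rho>) = SI S (\<lambda>x. (c' x)\<^sup>2) + 2 * SI S (\<lambda>x. c' x * h x) + (\<integral>\<theta>. SI S (\<lambda>x. (gfun \<theta> x)\<^sup>2) \<partial>\<rho>) + lm * (\<integral>\<theta>. aa \<theta> \<partial>\<rho>)"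
    unfolding \<Phi>_def using K[OF cc] G2(1) aa_integrable by (simp add: rho.prob_space)
  also have "\<dots> \<le> B"
  proof -
    have "SI S (\<lambda>x. (c' x)\<^sup>2) + 2 * SI S (\<lambda>x. c' x * h x) = SI S (\<lambda>x. (c' x)\<^sup>2 + 2 * (c' x * h x))"
      by (subst SI_add, (intro SIc continuous_intros cc h_cont)+) (simp add: SI_cmult)
    also have "\<dots> \<le> SI S (\<lambda>x. (c x)\<^sup>2)"
      by (rule SI_mono, (intro SIc continuous_intros cc h_cont c)+) (simp add: c'_def power2_eq_square algebra_simps)
    finally have 1: "SI S (\<lambda>x. (c' x)\<^sup>2) + 2 * SI S (\<lambda>x. c' x * h x) \<le> SI S (\<lambda>x. (c x)\<^sup>2)" .
    have 2: "(\<integral>\<theta>. SI S (\<lambda>x. (gfun \<theta> x)\<^sup>2) \<partial>\<rho>) \<le> (\<integral>\<theta>. measure lborel S * (aa \<theta>)\<^sup>2 \<partial>\<rho>)"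
      using G2 mom by (intro integral_mono) auto
    show ?thesis unfolding B_def using 1 2 by simp
  qed
  finally have IP: "(\<integral>\<theta>. \<Phi> \<theta> \<partial>\<rho>) \<le> B" .
  show ?thesis
  proof (rule ccontr)
    assume nt: "\<not> ?thesis"
    have gt: "B + \<epsilon> < \<Phi> \<theta>" for \<theta>
    proof (rule ccontr)
      assume "\<not> B + \<epsilon> < \<Phi> \<theta>"
      then have "SI S (\<lambda>x. (c x + gfun \<theta> x - h x)\<^sup>2) + lm * aa \<theta> \<le> B + \<epsilon>" using eqP[of \<theta>] by simp
      then show False using nt unfolding B_def by blast
    qed
    have "(\<integral>\<theta>. B + \<epsilon> \<partial>\<rho>) \<le> (\<integral>\<theta>. \<Phi> \<theta> \<partial>\<rho>)"
      using gt intP by (intro integral_mono) (auto intro: less_imp_le)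
    then show False using IP e by (simp add: rho.prob_space)
  qed
qed

lemma A_le:
  assumes s: "0 < z"
  shows "(\<integral>\<theta>. aa \<theta> \<partial>\<rho>) \<le> ((\<integral>\<theta>. (aa \<theta>)\<^sup>2 \<partial>\<rho>) / z + z) / 2"
proof -
  have pw: "aa \<theta> \<le> (aa \<theta>)\<^sup>2 / (2*z) + z / 2" for \<theta>
  proof -
    have "0 \<le> (aa \<theta> - z)\<^sup>2" by simp
    then have "2 * z * aa \<theta> \<le> (aa \<theta>)\<^sup>2 + z\<^sup>2" by (simp add: power2_eq_square algebra_simps)
    then show ?thesis using s by (simp add: field_simps power2_eq_square)
  qed
  have "(\<integral>\<theta>. aa \<theta> \<partial>\<rho>) \<le> (\<integral>\<theta>. (aa \<theta>)\<^sup>2 / (2*z) + z / 2 \<partial>\<rho>)"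
    using pw aa_integrable mom by (intro integral_mono) auto
  also have "\<dots> = (\<integral>\<theta>. (aa \<theta>)\<^sup>2 \<partial>\<rho>) / (2*z) + z / 2"
    using mom by (simp add: rho.prob_space)
  also have "\<dots> = ((\<integral>\<theta>. (aa \<theta>)\<^sup>2 \<partial>\<rho>) / z + z) / 2" by (simp add: field_simps)
  finally show ?thesis .
qed

lemma h_abs: "x \<in> S \<Longrightarrow> \<bar>h x\<bar> \<le> (\<integral>\<theta>. aa \<theta> \<partial>\<rho>)"
proof -
  assume x: "x \<in> S"
  have b: "\<bar>gfun \<theta> x\<bar> \<le> aa \<theta>" for \<theta> using S_cube x abs_gfun_le by blast
  have i: "integrable \<rho> (\<lambda>\<theta>. gfun \<theta> x)" and hx: "h x = (\<integral>\<theta>. gfun \<theta> x \<partial>\<rho>)" using rep[OF x] by auto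
  have "(\<integral>\<theta>. gfun \<theta> x \<partial>\<rho>) \<le> (\<integral>\<theta>. aa \<theta> \<partial>\<rho>)"
    by (rule integral_mono[OF i aa_integrable]) (use b in \<open>auto simp: abs_le_iff\<close>)
  moreover have "(\<integral>\<theta>. - gfun \<theta> x \<partial>\<rho>) \<le> (\<integral>\<theta>. aa \<theta> \<partial>\<rho>)"
    by (rule integral_mono[OF integrable_minus[OF i] aa_integrable]) (use b in \<open>auto simp: abs_le_iff\<close>)
  ultimately have "h x \<le> (\<integral>\<theta>. aa \<theta> \<partial>\<rho>) \<and> - h x \<le> (\<integral>\<theta>. aa \<theta> \<partial>\<rho>)"
    unfolding hx by (simp only: integral_minus)
  then show ?thesis by linarith
qed

lemma h_sq: "x \<in> S \<Longrightarrow> (h x)\<^sup>2 \<le> (\<integral>\<theta>. (aa \<theta>)\<^sup>2 \<partial>\<rho>)"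
proof (rule ccontr)
  assume x: "x \<in> S" and n: "\<not> (h x)\<^sup>2 \<le> (\<integral>\<theta>. (aa \<theta>)\<^sup>2 \<partial>\<rho>)"
  let ?M = "(\<integral>\<theta>. (aa \<theta>)\<^sup>2 \<partial>\<rho>)"
  have M0: "0 \<le> ?M" by simp
  have a: "0 < \<bar>h x\<bar>" using n M0 by (cases "h x = 0") auto
  have "\<bar>h x\<bar> \<le> (?M / \<bar>h x\<bar> + \<bar>h x\<bar>) / 2" using h_abs[OF x] A_le[OF a] by linarith
  then have "2 * \<bar>h x\<bar> * \<bar>h x\<bar> \<le> ?M + \<bar>h x\<bar> * \<bar>h x\<bar>" using a by (simp add: field_simps)
  then have "(h x)\<^sup>2 \<le> ?M" by (simp add: power2_eq_square abs_mult_self_eq)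
  then show False using n by simp
qed

lemma iter:
  assumes lam: "0 \<le> lm" and e: "0 < \<epsilon>"
  shows "\<exists>\<Theta>. SI S (\<lambda>x. ((\<Sum>q<t. gfun (\<Theta> q) x) - real t * h x)\<^sup>2) + lm * (\<Sum>q<t. aa (\<Theta> q)) \<le>
     real t * (measure lborel S * (\<integral>\<theta>. (aa \<theta>)\<^sup>2 \<partial>\<rho>) + lm * (\<integral>\<theta>. aa \<theta> \<partial>\<rho>) + \<epsilon>)"
proof (induction t)
  case 0
  then show ?case by (simp add: SI_def)
next
  case (Suc t)
  then obtain \<Theta> where T: "SI S (\<lambda>x. ((\<Sum>q<t. gfun (\<Theta> q) x) - real t * h x)\<^sup>2) + lm * (\<Sum>q<t. aa (\<Theta> q)) \<le>
     real t * (measure lborel S * (\<integral>\<theta>. (aa \<theta>)\<^sup>2 \<partial>\<rho>) + lm * (\<integral>\<theta>. aa \<theta> \<partial>\<rho>) + \<epsilon>)" by blast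
  define c where "c = (\<lambda>x. (\<Sum>q<t. gfun (\<Theta> q) x) - real t * h x)"
  have cc: "continuous_on S c" unfolding c_def by (intro continuous_intros cont_gfun h_cont)
  obtain \<theta> where th: "SI S (\<lambda>x. (c x + gfun \<theta> x - h x)\<^sup>2) + lm * aa \<theta> \<le>
     SI S (\<lambda>x. (c x)\<^sup>2) + measure lborel S * (\<integral>\<theta>. (aa \<theta>)\<^sup>2 \<partial>\<rho>) + lm * (\<integral>\<theta>. aa \<theta> \<partial>\<rho>) + \<epsilon>"
    using step[OF cc lam e] by blast
  define Tn where "Tn = (\<lambda>q. if q < t then \<Theta> q else \<theta>)"
  have s1: "(\<Sum>q<Suc t. gfun (Tn q) x) = (\<Sum>q<t. gfun (\<Theta> q) x) + gfun \<theta> x" for x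
  proof -
    have "(\<Sum>q<t. gfun (Tn q) x) = (\<Sum>q<t. gfun (\<Theta> q) x)" by (rule sum.cong) (simp_all add: Tn_def)
    then show ?thesis by (simp add: Tn_def)
  qed
  have s2: "(\<Sum>q<Suc t. aa (Tn q)) = (\<Sum>q<t. aa (\<Theta> q)) + aa \<theta>"
  proof -
    have "(\<Sum>q<t. aa (Tn q)) = (\<Sum>q<t. aa (\<Theta> q))" by (rule sum.cong) (simp_all add: Tn_def)
    then show ?thesis by (simp add: Tn_def)
  qed
  have e1: "(\<lambda>x. ((\<Sum>q<Suc t. gfun (Tn q) x) - real (Suc t) * h x)\<^sup>2) = (\<lambda>x. (c x + gfun \<theta> x - h x)\<^sup>2)"
    unfolding s1 c_def by (simp add: algebra_simps)
  have "SI S (\<lambda>x. ((\<Sum>q<Suc t. gfun (Tn q) x) - real (Suc t) * h x)\<^sup>2) + lm * (\<Sum>q<Suc t. aa (Tn q))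
     = (SI S (\<lambda>x. (c x + gfun \<theta> x - h x)\<^sup>2) + lm * aa \<theta>) + lm * (\<Sum>q<t. aa (\<Theta> q))"
    by (simp only: e1 s2) (simp add: algebra_simps)
  also have "\<dots> \<le> real (Suc t) * (measure lborel S * (\<integral>\<theta>. (aa \<theta>)\<^sup>2 \<partial>\<rho>) + lm * (\<integral>\<theta>. aa \<theta> \<partial>\<rho>) + \<epsilon>)"
  proof -
    let ?Z = "measure lborel S * (\<integral>\<theta>. (aa \<theta>)\<^sup>2 \<partial>\<rho>) + lm * (\<integral>\<theta>. aa \<theta> \<partial>\<rho>) + \<epsilon>"
    have "real (Suc t) * ?Z = real t * ?Z + ?Z" by (simp add: algebra_simps)
    moreover have "SI S (\<lambda>x. (c x)\<^sup>2) + lm * (\<Sum>q<t. aa (\<Theta> q)) \<le> real t * ?Z" using T by (simp only: c_def)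
    moreover note th
    ultimately show ?thesis by linarith
  qed
  finally show ?case by blast
qed

lemma leaf_approx:
  assumes m: "0 < m" and Sp: "0 < measure lborel S" and Mp: "0 < (\<integral>\<theta>. (aa \<theta>)\<^sup>2 \<partial>\<rho>)" and e: "0 < \<epsilon>"
  shows "\<exists>\<Theta>. SI S (\<lambda>x. ((\<Sum>q<m. gfun (\<Theta> q) x) / real m - h x)\<^sup>2) \<le> (2 * measure lborel S * (\<integral>\<theta>. (aa \<theta>)\<^sup>2 \<partial>\<rho>) + \<epsilon>) / real m
     \<and> (\<Sum>q<m. aa (\<Theta> q)) / real m \<le> 2 * sqrt (\<integral>\<theta>. (aa \<theta>)\<^sup>2 \<partial>\<rho>) + \<epsilon> / (measure lborel S * sqrt (\<integral>\<theta>. (aa \<theta>)\<^sup>2 \<partial>\<rho>))"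
proof -
  define M where "M = (\<integral>\<theta>. (aa \<theta>)\<^sup>2 \<partial>\<rho>)"
  define A where "A = (\<integral>\<theta>. aa \<theta> \<partial>\<rho>)"
  define V where "V = measure lborel S"
  define sM where "sM = sqrt M"
  have sMp: "0 < sM" using Mp unfolding sM_def M_def by simp
  have sMsq: "sM * sM = M" using Mp unfolding sM_def M_def by simp
  have Vp: "0 < V" using Sp unfolding V_def .
  have AsM: "A \<le> sM"
  proof -
    have "A \<le> (M / sM + sM) / 2" using A_le[OF sMp] unfolding A_def M_def .
    also have "M / sM = sM" using sMsq sMp by (simp add: field_simps)
    finally show ?thesis by simp
  qed
  define lm where "lm = V * sM"
  have lmp: "0 < lm" unfolding lm_def using Vp sMp by simp
  obtain \<Theta> where T: "SI S (\<lambda>x. ((\<Sum>q<m. gfun (\<Theta> q) x) - real m * h x)\<^sup>2) + lm * (\<Sum>q<m. aa (\<Theta> q)) \<le>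
     real m * (V * M + lm * A + \<epsilon>)"
    using iter[of lm \<epsilon> m] lmp e unfolding V_def M_def A_def by auto
  let ?X = "SI S (\<lambda>x. ((\<Sum>q<m. gfun (\<Theta> q) x) - real m * h x)\<^sup>2)"
  let ?Y = "(\<Sum>q<m. aa (\<Theta> q))"
  have X0: "0 \<le> ?X" by (rule SI_nonneg) simp
  have Y0: "0 \<le> ?Y" by (intro sum_nonneg aa_nonneg)
  have "V * (sM * A) \<le> V * (sM * sM)" using AsM sMp Vp by (intro mult_left_mono) auto
  then have "lm * A \<le> V * M" unfolding lm_def sMsq by (simp only: mult.assoc)
  then have "real m * (V * M + lm * A + \<epsilon>) \<le> real m * (2 * V * M + \<epsilon>)"
    by (intro mult_left_mono) (simp_all add: mult.commute)
  then have R: "?X + lm * ?Y \<le> real m * (2 * V * M + \<epsilon>)"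
    using T by linarith
  have mp: "0 < real m" using m by simp
  have eqX: "SI S (\<lambda>x. ((\<Sum>q<m. gfun (\<Theta> q) x) / real m - h x)\<^sup>2) = ?X / (real m)\<^sup>2"
  proof -
    have "(\<lambda>x. ((\<Sum>q<m. gfun (\<Theta> q) x) / real m - h x)\<^sup>2) = (\<lambda>x. (1 / (real m)\<^sup>2) * ((\<Sum>q<m. gfun (\<Theta> q) x) - real m * h x)\<^sup>2)"
      using mp by (intro ext) (simp add: field_simps power2_eq_square)
    then have "SI S (\<lambda>x. ((\<Sum>q<m. gfun (\<Theta> q) x) / real m - h x)\<^sup>2) = SI S (\<lambda>x. (1 / (real m)\<^sup>2) * ((\<Sum>q<m. gfun (\<Theta> q) x) - real m * h x)\<^sup>2)"
      by (rule arg_cong)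
    also have "\<dots> = 1 / (real m)\<^sup>2 * ?X" by (rule SI_cmult)
    finally show ?thesis by simp
  qed
  have "0 \<le> lm * ?Y" using lmp Y0 by simp
  then have "?X \<le> real m * (2 * V * M + \<epsilon>)" using R by linarith
  then have 1: "SI S (\<lambda>x. ((\<Sum>q<m. gfun (\<Theta> q) x) / real m - h x)\<^sup>2) \<le> (2 * V * M + \<epsilon>) / real m"
    unfolding eqX using mp by (simp add: field_simps power2_eq_square)
  have "lm * ?Y \<le> real m * (2 * V * M + \<epsilon>)" using R X0 by linarith
  then have "?Y / real m \<le> (2 * V * M + \<epsilon>) / lm" using mp lmp by (simp add: field_simps)
  also have "(2 * V * M + \<epsilon>) / lm = 2 * sM + \<epsilon> / (V * sM)"
    unfolding lm_def using Vp sMp sMsq[symmetric] by (simp add: field_simps)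
  finally have 2: "?Y / real m \<le> 2 * sM + \<epsilon> / (V * sM)" .
  show ?thesis using 1 2 unfolding V_def sM_def M_def by blast
qed

end


lemma unif_SI: "unif_expect S g = SI S g / measure lborel S"
  by (simp add: unif_expect_def set_lebesgue_integral_def SI_def)

lemma leaf_resnet_gfun: "resnet m (Suc m) (Suc 0) (leaf m (\<lambda>q. fst (\<Theta> q) / real m) (\<lambda>q. snd (\<Theta> q))) x
   = (\<Sum>q<m. gfun (\<Theta> q) x) / real m"
  by (simp add: leaf_resnet gfun_def sum_divide_distrib)

lemma leaf_path_aa: "path_norm m (Suc m) (Suc 0) (leaf m (\<lambda>q. fst (\<Theta> q) / real m) (\<lambda>q. snd (\<Theta> q)))
   = 3 * ((\<Sum>q<m. aa (\<Theta> q)) / real m)"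
  by (simp add: leaf_path aa_def sum_divide_distrib)

lemma moments_nonneg: "y \<in> barron_moments S h \<Longrightarrow> 0 \<le> y"
  unfolding barron_moments_def by (auto intro!: integral_nonneg_AE simp: split_beta)

lemma Inf_moments_nonneg: "barron_space S h \<Longrightarrow> 0 \<le> Inf (barron_moments S h)"
  unfolding barron_space_def by (rule cInf_greatest) (auto intro: moments_nonneg)

lemma leaf_net:
  fixes S :: "(real^'d::finite) set" and h :: "real^'d \<Rightarrow> real"
  assumes S_compact: "compact S"
    and S_cube: "\<forall>x\<in>S. \<forall>i. 0 \<le> x $ i \<and> x $ i \<le> 1"
    and Sp: "0 < measure lborel S"
    and hc: "continuous_on S h"
    and hb: "barron_space S h"
    and m: "0 < m"
  shows "\<exists>\<theta>::'d resnet_params. uzero m \<theta>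
     \<and> unif_expect S (\<lambda>s. (resnet m (Suc m) (Suc 0) \<theta> s - h s)\<^sup>2) \<le> 16 * (barron_norm S h)\<^sup>2 / real m
     \<and> path_norm m (Suc m) (Suc 0) \<theta> \<le> 12 * barron_norm S h"
proof (cases "\<forall>x\<in>S. h x = 0")
  case True
  let ?\<theta> = "leaf m (\<lambda>q. 0) (\<lambda>q. 0) :: 'd resnet_params"
  have r0: "resnet m (Suc m) (Suc 0) ?\<theta> x = 0" for x by (simp add: leaf_resnet)
  have p0: "path_norm m (Suc m) (Suc 0) ?\<theta> = 0" by (simp add: leaf_path)
  have "(\<lambda>x. indicator S x * (resnet m (Suc m) (Suc 0) ?\<theta> x - h x)\<^sup>2) = (\<lambda>x. 0)"
    by (rule ext) (auto simp: indicator_def r0 True)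
  then have "SI S (\<lambda>s. (resnet m (Suc m) (Suc 0) ?\<theta> s - h s)\<^sup>2) = 0"
    unfolding SI_def by simp
  then show ?thesis using leaf_uzero[of m "\<lambda>q. 0" "\<lambda>q. 0"] p0 unfolding unif_SI
    using Inf_moments_nonneg[OF hb] by (intro exI[of _ ?\<theta>]) (simp add: barron_norm_def)
next
  case False
  then obtain x0 where x0: "x0 \<in> S" "h x0 \<noteq> 0" by blast
  let ?B = "barron_moments S h"
  have Bne: "?B \<noteq> {}" using hb unfolding barron_space_def .
  have setting: "barron_setting S h \<rho>" if rp: "barron_rep S h \<rho>" and ip: "integrable \<rho> (\<lambda>(u,w). u\<^sup>2 * (l1norm w)\<^sup>2)" for \<rho>
  proof -
    have eq1: "(\<lambda>(u,w). u * relu (w \<bullet> x)) = (\<lambda>\<theta>. gfun \<theta> x)" for x :: "real^'d"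
      by (rule ext) (simp add: gfun_def split_beta)
    have eq2: "(\<lambda>(u,w). u\<^sup>2 * (l1norm w)\<^sup>2) = (\<lambda>\<theta>. (aa \<theta>)\<^sup>2)"
      by (rule ext) (simp add: aa_def power_mult_distrib split_beta)
    have "prob_space \<rho>" "sets \<rho> = sets borel"
      "\<And>x. x \<in> S \<Longrightarrow> integrable \<rho> (\<lambda>\<theta>. gfun \<theta> x) \<and> h x = (\<integral>\<theta>. gfun \<theta> x \<partial>\<rho>)"
      using rp unfolding barron_rep_def eq1 by blast+
    moreover have "integrable \<rho> (\<lambda>\<theta>. (aa \<theta>)\<^sup>2)" using ip unfolding eq2 .
    ultimately show ?thesis
      using S_compact S_cube hc unfolding barron_setting_def by blast
  qed
  have M_eq: "(\<integral>(u,w). u\<^sup>2 * (l1norm w)\<^sup>2 \<partial>\<rho>) = (\<integral>\<theta>. (aa \<theta>)\<^sup>2 \<partial>\<rho>)" for \<rho> :: "(real \<times> (real^'d)) measure"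
  proof -
    have E: "(\<lambda>(u,w). u\<^sup>2 * (l1norm w)\<^sup>2) = (\<lambda>\<theta>. (aa \<theta>)\<^sup>2)"
      by (rule ext) (simp add: aa_def power_mult_distrib split_beta)
    show ?thesis unfolding E ..
  qed
  have lowB: "(h x0)\<^sup>2 \<le> y" if yB: "y \<in> ?B" for y
  proof -
    obtain \<rho> where rp: "barron_rep S h \<rho>" and ip: "integrable \<rho> (\<lambda>(u,w). u\<^sup>2 * (l1norm w)\<^sup>2)"
      and y: "y = (\<integral>(u,w). u\<^sup>2 * (l1norm w)\<^sup>2 \<partial>\<rho>)"
      using yB unfolding barron_moments_def by blast
    interpret barron_setting S h \<rho> by (rule setting[OF rp ip])
    show ?thesis using h_sq[OF x0(1)] unfolding y M_eq .
  qed
  define I where "I = Inf ?B"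
  have I_ge: "(h x0)\<^sup>2 \<le> I" unfolding I_def by (rule cInf_greatest[OF Bne lowB])
  have "0 < (h x0)\<^sup>2" using x0(2) by simp
  then have Ip: "0 < I" using I_ge by linarith
  define N where "N = barron_norm S h"
  have NI: "N = sqrt I" by (simp add: N_def barron_norm_def I_def)
  have Np: "0 < N" unfolding NI using Ip by simp
  have N2: "N * N = I" unfolding NI using Ip by simp
  have "Inf ?B < 2 * I" using Ip unfolding I_def by simp
  then obtain y where yB: "y \<in> ?B" and y2: "y < 2 * I" using cInf_lessD[OF Bne] by blast
  obtain \<rho> where rp: "barron_rep S h \<rho>" and ip: "integrable \<rho> (\<lambda>(u,w). u\<^sup>2 * (l1norm w)\<^sup>2)"
    and y: "y = (\<integral>(u,w). u\<^sup>2 * (l1norm w)\<^sup>2 \<partial>\<rho>)"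
    using yB unfolding barron_moments_def by blast
  interpret barron_setting S h \<rho> by (rule setting[OF rp ip])
  define M where "M = (\<integral>\<theta>. (aa \<theta>)\<^sup>2 \<partial>\<rho>)"
  have My: "M = y" unfolding y M_eq M_def ..
  have "0 < (h x0)\<^sup>2" using x0(2) by simp
  then have Mp: "0 < M" using h_sq[OF x0(1)] unfolding M_def by linarith
  have M2: "M < 2 * (N * N)" using y2 My N2 by simp
  have sM: "sqrt M \<le> 3/2 * N"
  proof -
    have nn: "0 \<le> N * N" by simp
    have "(3/2 * N)\<^sup>2 = 9/4 * (N * N)" by (simp add: power2_eq_square)
    then have "M \<le> (3/2 * N)\<^sup>2" using M2 nn by linarith
    then have "sqrt M \<le> sqrt ((3/2 * N)\<^sup>2)" by (rule real_sqrt_le_mono)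
    also have "\<dots> = 3/2 * N" using Np by simp
    finally show ?thesis .
  qed
  have sMp: "0 < sqrt M" using Mp by simp
  define \<epsilon> where "\<epsilon> = measure lborel S * sqrt M * N / 2"
  have ep: "0 < \<epsilon>" unfolding \<epsilon>_def using Sp sMp Np by simp
  obtain \<Theta> where T1: "SI S (\<lambda>x. ((\<Sum>q<m. gfun (\<Theta> q) x) / real m - h x)\<^sup>2) \<le> (2 * measure lborel S * M + \<epsilon>) / real m"
    and T2: "(\<Sum>q<m. aa (\<Theta> q)) / real m \<le> 2 * sqrt M + \<epsilon> / (measure lborel S * sqrt M)"
    using leaf_approx[OF m Sp Mp[unfolded M_def] ep] unfolding M_def by blast
  let ?\<theta> = "leaf m (\<lambda>q. fst (\<Theta> q) / real m) (\<lambda>q. snd (\<Theta> q)) :: 'd resnet_params"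
  have mp: "0 < real m" using m by simp
  have e1: "\<epsilon> / (measure lborel S * sqrt M) = N / 2" unfolding \<epsilon>_def using Sp sMp by (simp add: field_simps)
  have e2: "(2 * measure lborel S * M + \<epsilon>) / real m / measure lborel S = (2 * M + sqrt M * N / 2) / real m"
    unfolding \<epsilon>_def using Sp mp by (simp add: field_simps)
  have "unif_expect S (\<lambda>s. (resnet m (Suc m) (Suc 0) ?\<theta> s - h s)\<^sup>2)
      = SI S (\<lambda>x. ((\<Sum>q<m. gfun (\<Theta> q) x) / real m - h x)\<^sup>2) / measure lborel S"
    unfolding unif_SI leaf_resnet_gfun ..
  also have "\<dots> \<le> (2 * measure lborel S * M + \<epsilon>) / real m / measure lborel S"
    by (rule divide_right_mono[OF T1]) (use Sp in simp)
  also have "\<dots> = (2 * M + sqrt M * N / 2) / real m" by (rule e2)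
  also have "\<dots> \<le> 16 * (N * N) / real m"
  proof (rule divide_right_mono)
    have a: "sqrt M * N \<le> (3/2 * N) * N" by (rule mult_right_mono[OF sM]) (use Np in simp)
    have b: "(3/2 * N) * N = 3/2 * (N * N)" by simp
    have nn: "0 \<le> N * N" by simp
    show "2 * M + sqrt M * N / 2 \<le> 16 * (N * N)" using a b M2 nn by linarith
  qed (use mp in simp)
  finally have err: "unif_expect S (\<lambda>s. (resnet m (Suc m) (Suc 0) ?\<theta> s - h s)\<^sup>2) \<le> 16 * (barron_norm S h)\<^sup>2 / real m"
    unfolding N_def by (simp add: power2_eq_square)
  have "path_norm m (Suc m) (Suc 0) ?\<theta> = 3 * ((\<Sum>q<m. aa (\<Theta> q)) / real m)" by (rule leaf_path_aa)
  also have "\<dots> \<le> 3 * (2 * sqrt M + N / 2)" using T2 e1 by simp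
  also have "\<dots> \<le> 12 * N"
  proof -
    have "3 * (2 * sqrt M + N / 2) = 6 * sqrt M + 3/2 * N" by (simp add: algebra_simps)
    then show ?thesis using sM Np by linarith
  qed
  finally have pn: "path_norm m (Suc m) (Suc 0) ?\<theta> \<le> 12 * barron_norm S h" unfolding N_def .
  show ?thesis using leaf_uzero[of m "\<lambda>q. fst (\<Theta> q) / real m" "\<lambda>q. snd (\<Theta> q)"] err pn by blast
qed


lemma cont_hidden: "continuous_on A (\<lambda>x. resnet_hidden m D \<theta> x l i)"
proof (induction l arbitrary: i)
  case 0 then show ?case by (simp, intro continuous_intros)
next
  case (Suc l)
  show ?case by (simp only: resnet_hidden.simps, intro continuous_intros Suc)
qed

lemma cont_resnet: "continuous_on A (\<lambda>x. resnet m D L \<theta> x)"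
  unfolding resnet_def by (intro continuous_intros cont_hidden)

lemma cont_tmax: "(\<And>i. b < i \<Longrightarrow> i \<le> b + 2^k \<Longrightarrow> continuous_on A (\<lambda>x. F i x)) \<Longrightarrow>
   continuous_on A (\<lambda>x. tmax (\<lambda>i. F i x) k b)"
proof (induction k arbitrary: b)
  case 0 then show ?case by simp
next
  case (Suc k)
  have a: "continuous_on A (\<lambda>x. tmax (\<lambda>i. F i x) k b)" using Suc.prems by (intro Suc.IH) auto
  have b: "continuous_on A (\<lambda>x. tmax (\<lambda>i. F i x) k (b + 2^k))" using Suc.prems by (intro Suc.IH) auto
  show ?case by (simp only: tmax.simps, rule continuous_on_max[OF a b])
qed

lemma Max_sq_le:
  fixes a b :: "nat \<Rightarrow> real"
  assumes fin: "finite I" and ne: "I \<noteq> {}"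
  shows "(Max (a ` I) - Max (b ` I))\<^sup>2 \<le> (\<Sum>i\<in>I. (a i - b i)\<^sup>2)"
proof -
  have "Max (a ` I) \<in> a ` I" using fin ne by simp
  then obtain i1 where i1: "i1 \<in> I" "a i1 = Max (a ` I)" by (metis imageE)
  have "Max (b ` I) \<in> b ` I" using fin ne by simp
  then obtain i2 where i2: "i2 \<in> I" "b i2 = Max (b ` I)" by (metis imageE)
  have b1: "b i1 \<le> Max (b ` I)" using fin i1 by simp
  have a2: "a i2 \<le> Max (a ` I)" using fin i2 by simp
  have single: "(a i - b i)\<^sup>2 \<le> (\<Sum>i\<in>I. (a i - b i)\<^sup>2)" if "i \<in> I" for i
    by (rule member_le_sum[OF that]) (simp_all add: fin)
  show ?thesis
  proof (cases "Max (b ` I) \<le> Max (a ` I)")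
    case True
    have "(Max (a ` I) - Max (b ` I))\<^sup>2 \<le> (a i1 - b i1)\<^sup>2"
      by (rule power_mono) (use True i1 b1 in linarith)+
    then show ?thesis using single[OF i1(1)] by linarith
  next
    case False
    have "(Max (a ` I) - Max (b ` I))\<^sup>2 = (Max (b ` I) - Max (a ` I))\<^sup>2" by (simp add: power2_commute)
    also have "\<dots> \<le> (b i2 - a i2)\<^sup>2"
      by (rule power_mono) (use False i2 a2 in linarith)+
    also have "\<dots> = (a i2 - b i2)\<^sup>2" by (simp add: power2_commute)
    finally show ?thesis using single[OF i2(1)] by linarith
  qed
qed

lemma SI_sum:
  assumes "\<And>i. i \<in> I \<Longrightarrow> integrable lborel (\<lambda>x. indicator S x * f i x)"
  shows "SI S (\<lambda>x. \<Sum>i\<in>I. f i x) = (\<Sum>i\<in>I. SI S (f i))"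
  unfolding SI_def sum_distrib_left
  using Bochner_Integration.integral_sum[where I=I and M=lborel and f="\<lambda>i x. indicator S x * f i x", OF assms] by simp


theorem proposition3p2:
  fixes S :: "(real^'d::finite) set"
    and r :: "real^'d \<Rightarrow> nat \<Rightarrow> real"
    and \<alpha> k j m :: nat
  assumes S_compact: "compact S"
    and S_cube: "\<forall>x\<in>S. \<forall>i. 0 \<le> x $ i \<and> x $ i \<le> 1"
    and S_pos: "emeasure lborel S > 0"
    and r_cont: "\<forall>a\<in>{1..2^\<alpha>}. continuous_on S (\<lambda>s. r s a)"
    and r_barron: "\<forall>a\<in>{1..2^\<alpha>}. barron_space S (\<lambda>s. r s a)"
    and r_bound: "\<forall>a\<in>{1..2^\<alpha>}. \<forall>s\<in>S. \<bar>r s a\<bar> \<le> 1"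
    and k_le: "k \<le> \<alpha>"
    and j_range: "j \<in> {1..2^(\<alpha> - k)}"
    and m_pos: "0 < m"
  shows "\<exists>(D::nat) (\<theta>::'d resnet_params). 0 < D \<and>
     unif_expect S (\<lambda>s. (resnet (6^k * m) D (k+1) \<theta> s
                          - Max {r s i | i. (j-1)*2^k < i \<and> i \<le> j*2^k})\<^sup>2)
       \<le> 5^k * (16 * (\<Sum>i=(j-1)*2^k+1..j*2^k. (barron_norm S (\<lambda>s. r s i))\<^sup>2) / m)
     \<and> path_norm (6^k * m) D (k+1) \<theta>
       \<le> (7/2)^k * (\<Sum>i=(j-1)*2^k+1..j*2^k. 12 * barron_norm S (\<lambda>s. r s i))"
proof -
  have Sp: "0 < measure lborel S"
    unfolding measure_def using S_pos emeasure_compact_finite[OF S_compact]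
    by (simp add: enn2real_positive_iff)
  have "\<forall>i\<in>{1..2^\<alpha>}. \<exists>\<theta>::'d resnet_params. uzero m \<theta>
     \<and> unif_expect S (\<lambda>s. (resnet m (Suc m) (Suc 0) \<theta> s - r s i)\<^sup>2) \<le> 16 * (barron_norm S (\<lambda>s. r s i))\<^sup>2 / real m
     \<and> path_norm m (Suc m) (Suc 0) \<theta> \<le> 12 * barron_norm S (\<lambda>s. r s i)"
    using leaf_net[OF S_compact S_cube Sp _ _ m_pos] r_cont r_barron by blast
  then obtain \<Theta> :: "nat \<Rightarrow> 'd resnet_params" where
    Th: "\<forall>i \<in> {1..2^\<alpha>}. uzero m (\<Theta> i)
     \<and> unif_expect S (\<lambda>s. (resnet m (Suc m) (Suc 0) (\<Theta> i) s - r s i)\<^sup>2) \<le> 16 * (barron_norm S (\<lambda>s. r s i))\<^sup>2 / real m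
     \<and> path_norm m (Suc m) (Suc 0) (\<Theta> i) \<le> 12 * barron_norm S (\<lambda>s. r s i)"
    by (rule bchoice[THEN exE]) assumption
  define b where "b = (j - 1) * 2^k"
  have j1: "1 \<le> j" using j_range by simp
  have jb: "j * 2^k = b + 2^k" unfolding b_def using j1 by (cases j) auto
  have "j * 2^k \<le> 2^(\<alpha> - k) * 2^k" using j_range by simp
  also have "\<dots> = 2^\<alpha>" using k_le by (simp add: power_add[symmetric])
  finally have top: "b + 2^k \<le> 2^\<alpha>" using jb by simp
  have blk: "i \<in> {1..2^\<alpha>}" if "b < i" "i \<le> b + 2^k" for i using that top by auto
  define F where "F = (\<lambda>i x. resnet m (Suc m) (Suc 0) (\<Theta> i) x)"
  define P where "P = (\<lambda>i. path_norm m (Suc m) (Suc 0) (\<Theta> i))"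
  obtain T :: "'d resnet_params" where T: "uzero (2^k*m) T"
    "\<forall>x. resnet (2^k*m) (Dk m k) (Suc k) T x = tmax (\<lambda>i. F i x) k b"
    "path_norm (2^k*m) (Dk m k) (Suc k) T \<le> (7/2)^k * (\<Sum>i\<in>{b<..b+2^k}. P i)"
  proof -
    have "\<exists>\<theta>::'d resnet_params. uzero (2^k*m) \<theta> \<and> (\<forall>x. resnet (2^k*m) (Dk m k) (Suc k) \<theta> x = tmax (\<lambda>i. F i x) k b)
     \<and> path_norm (2^k*m) (Dk m k) (Suc k) \<theta> \<le> (7/2)^k * (\<Sum>i\<in>{b<..b+2^k}. P i)"
    proof (rule tree_net[OF m_pos])
      fix i assume "b < i" "i \<le> b + 2^k"
      then have "i \<in> {1..2^\<alpha>}" by (rule blk)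
      then show "\<exists>\<theta>. uzero m \<theta> \<and> (\<forall>x. resnet m (Suc m) (Suc 0) \<theta> x = F i x) \<and> path_norm m (Suc m) (Suc 0) \<theta> \<le> P i"
        using Th unfolding F_def P_def by blast
    qed
    then show ?thesis using that by blast
  qed
  have wle: "2^k * m \<le> 6^k * m" by (simp add: power_mono)
  have Dp: "0 < Dk m k" by (cases k) auto
  let ?I = "{b<..b+2^k}"
  have Iset: "{(j-1)*2^k+1..j*2^k} = ?I" unfolding jb b_def by auto
  have Mset: "{r s i | i. (j-1)*2^k < i \<and> i \<le> j*2^k} = (\<lambda>i. r s i) ` ?I" for s
    unfolding jb b_def[symmetric] by auto
  have resT: "resnet (6^k * m) (Dk m k) (k+1) T s = tmax (\<lambda>i. F i s) k b" for s
    using resnet_width[OF T(1) wle] T(2) by simp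
  have pnT: "path_norm (6^k * m) (Dk m k) (k+1) T = path_norm (2^k*m) (Dk m k) (Suc k) T"
    using path_norm_width[OF T(1) wle] by simp
  have finI: "finite ?I" and neI: "?I \<noteq> {}" by auto
  have contF: "continuous_on S (\<lambda>x. F i x)" for i unfolding F_def by (rule cont_resnet)
  have contr: "continuous_on S (\<lambda>x. r x i)" if "i \<in> ?I" for i
    using r_cont blk that by auto
  have pw: "(tmax (\<lambda>i. F i s) k b - Max {r s i | i. (j-1)*2^k < i \<and> i \<le> j*2^k})\<^sup>2 \<le> (\<Sum>i\<in>?I. (F i s - r s i)\<^sup>2)" for s
    unfolding Mset tmax_Max by (rule Max_sq_le[OF finI neI])
  have "unif_expect S (\<lambda>s. (resnet (6^k * m) (Dk m k) (k+1) T s - Max {r s i | i. (j-1)*2^k < i \<and> i \<le> j*2^k})\<^sup>2)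
     = SI S (\<lambda>s. (tmax (\<lambda>i. F i s) k b - Max {r s i | i. (j-1)*2^k < i \<and> i \<le> j*2^k})\<^sup>2) / measure lborel S"
    unfolding unif_SI resT ..
  also have "\<dots> \<le> SI S (\<lambda>s. \<Sum>i\<in>?I. (F i s - r s i)\<^sup>2) / measure lborel S"
  proof (rule divide_right_mono[OF SI_mono])
    show "integrable lborel (\<lambda>x. indicator S x * (tmax (\<lambda>i. F i x) k b - Max {r x i | i. (j-1)*2^k < i \<and> i \<le> j*2^k})\<^sup>2)"
      unfolding Mset tmax_Max[symmetric]
      by (intro SIable[OF S_compact] continuous_intros cont_tmax contF contr) auto
    show "integrable lborel (\<lambda>x. indicator S x * (\<Sum>i\<in>?I. (F i x - r x i)\<^sup>2))"
      by (intro SIable[OF S_compact] continuous_intros contF contr) auto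
  qed (use pw Sp in auto)
  also have "\<dots> = (\<Sum>i\<in>?I. unif_expect S (\<lambda>s. (F i s - r s i)\<^sup>2))"
    unfolding unif_SI sum_divide_distrib[symmetric]
    by (subst SI_sum) (auto intro!: SIable[OF S_compact] continuous_intros contF contr)
  also have "\<dots> \<le> (\<Sum>i\<in>?I. 16 * (barron_norm S (\<lambda>s. r s i))\<^sup>2 / real m)"
    by (rule sum_mono) (use Th blk in \<open>auto simp: F_def\<close>)
  also have "\<dots> = 16 * (\<Sum>i\<in>?I. (barron_norm S (\<lambda>s. r s i))\<^sup>2) / real m"
    by (simp add: sum_divide_distrib sum_distrib_left)
  also have "\<dots> \<le> 5^k * (16 * (\<Sum>i\<in>?I. (barron_norm S (\<lambda>s. r s i))\<^sup>2) / real m)"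
  proof -
    have "0 \<le> 16 * (\<Sum>i\<in>?I. (barron_norm S (\<lambda>s. r s i))\<^sup>2) / real m" by (simp add: sum_nonneg)
    moreover have "(1::real) \<le> 5^k" by simp
    ultimately show ?thesis using mult_right_mono[of 1 "5^k" "16 * (\<Sum>i\<in>?I. (barron_norm S (\<lambda>s. r s i))\<^sup>2) / real m"] by simp
  qed
  finally have err: "unif_expect S (\<lambda>s. (resnet (6^k * m) (Dk m k) (k+1) T s - Max {r s i | i. (j-1)*2^k < i \<and> i \<le> j*2^k})\<^sup>2)
     \<le> 5^k * (16 * (\<Sum>i=(j-1)*2^k+1..j*2^k. (barron_norm S (\<lambda>s. r s i))\<^sup>2) / m)"
    unfolding Iset .
  have "path_norm (6^k * m) (Dk m k) (k+1) T \<le> (7/2)^k * (\<Sum>i\<in>?I. P i)" using pnT T(3) by simp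
  also have "\<dots> \<le> (7/2)^k * (\<Sum>i\<in>?I. 12 * barron_norm S (\<lambda>s. r s i))"
    by (rule mult_left_mono, rule sum_mono) (use Th blk in \<open>auto simp: P_def\<close>)
  finally have pn: "path_norm (6^k * m) (Dk m k) (k+1) T \<le> (7/2)^k * (\<Sum>i=(j-1)*2^k+1..j*2^k. 12 * barron_norm S (\<lambda>s. r s i))"
    unfolding Iset .
  show ?thesis using Dp err pn by blast
qed


end
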